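(* For $i=1,\ldots,n$, $$T(t_i^{-1};\mathbf t)=\Phi_{\mathrm{bdy}}(t_i^{-1})\,C_{\tau_i}(\mathbf t)\big|_{q=1},\qquad T(t_i;\mathbf t)=\Phi_{\mathrm{bdy}}(t_i)\,C_{\tau_i}(\mathbf t)^{-1}\big|_{q=1}.$$
   Context: Parameters $\kappa_0,\kappa,\kappa_n,\upsilon_0,\upsilon_n,\psi_0,\psi_n\in\mathbb{C}^*$ generic, $\mathbf t\in(\mathbb{C}^* )^n$, $q\in\mathbb{C}^*$ with a square root $q^{1/2}$ (specialized to $q^{1/2}=1$ at $q=1$). Matrices w.r.t. ordered bases $(v_+,v_-)$, $(v_{+}\otimes v_+,v_+\otimes v_-,v_-\otimes v_+,v_-\otimes v_-)$; $P$ the flip; subscripts = tensor legs, $r_{ji}:=P_{ij}r_{ij}P_{ij}$. $r(x)=\frac{1}{1-\kappa^2x}\begin{pmatrix}1-\kappa^2x&0&0&0\\0&\kappa(1-x)&1-\kappa^2&0\\0&(1-\kappa^2)x&\kappa(1-x)&0\\0&0&0&1-\kappa^2x\end{pmatrix}$, $\check r(x)=r(x)\circ P$; $\bar k(x)=\frac{\kappa_0}{(1-\kappa_0\upsilon_0x)(1+\kappa_0\upsilon_0^{-1}x)}\begin{pmatrix}(\kappa_0^{-1}-\kappa_0)x^2+(\upsilon_0^{-1}-\upsilon_0)x&\psi_0(1-x^2)\\ \psi_0^{-1}(1-x^2)&\kappa_0^{-1}-\kappa_0+(\upsilon_0^{-1}-\upsilon_0)x\end{pmatrix}$; $k(x)=\frac{\kappa_n}{(1-\kappa_n\upsilon_nx)(1+\kappa_n\upsilon_n^{-1}x)}\begin{pmatrix}\kappa_n^{-1}-\kappa_n+(\upsilon_n^{-1}-\upsilon_n)x&\psi_n^{-1}(1-x^2)\\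 \psi_n(1-x^2)&(\kappa_n^{-1}-\kappa_n)x^2+(\upsilon_n^{-1}-\upsilon_n)x\end{pmatrix}$. Transfer matrix: $\theta=\mathrm{diag}(\kappa^{-1/2},\kappa^{1/2})$, $U_0(x;\mathbf t)=r_{01}(xt_1^{-1})\cdots r_{0n}(xt_n^{-1})k_0(x)r_{n0}(xt_n)\cdots r_{10}(xt_1)$ on $\mathbb{C}^2_{(0)}\otimes(\mathbb{C}^2)^{\otimes n}$, $T(x;\mathbf t)=\mathrm{Tr}_0(\theta_0\bar k_0(\kappa^2x)\theta_0U_0(x;\mathbf t))$. Transport operator: $C_{\tau_i}(\mathbf t)=\check r_{i-1,i}(t_{i-1}/t_i)\check r_{i-2,i-1}(t_{i-2}/t_i)\cdots\check r_{12}(t_1/t_i)\,\bar k_1(q^{1/2}/t_i)\,\check r_{12}(q/t_1t_i)\cdots\check r_{i-1,i}(q/t_{i-1}t_i)\,\check r_{i,i+1}(q/t_it_{i+1})\cdots\check r_{n-1,n}(q/t_it_n)\,k_n(q/t_i)\,\check r_{n-1,n}(qt_n/t_i)\cdots\check r_{i,i+1}(qt_{i+1}/t_i)$. $\Phi_{\mathrm{bdy}}(x)=\kappa\frac{(1-\kappa_0\upsilon_0x)(1+\kappa_0\upsilon_0^{-1}x)(1-\kappa^4x^2)}{(1-\kappa^2\kappa_0\upsilon_0x)(1+\kappa^2\kappa_0\upsilon_0^{-1}x)(1-\kappa^2x^2)}$. *)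

theory Defs
  imports Complex_Main
begin

text \<open>Basis vectors of C^2: True = v_+, False = v_-.  A basis vector of the
tensor product of copies of C^2 indexed by a finite set L of legs is a
function s :: nat => bool that is False outside L.  Operators are given by
their matrix entries A s u (row s, column u), and are zero outside states L.\<close>

type_synonym state = "nat \<Rightarrow> bool"
type_synonym op = "state \<Rightarrow> state \<Rightarrow> complex"

definition states :: "nat set \<Rightarrow> state set" where
  "states L = {s. \<forall>i. i \<notin> L \<longrightarrow> \<not> s i}"

definition mult :: "nat set \<Rightarrow> op \<Rightarrow> op \<Rightarrow> op" where
  "mult L A B = (\<lambda>s u. if s \<in> states L \<and> u \<in> states L
      then (\<Sum>v\<in>states L. A s v * B v u) else 0)"

definition idop :: "nat set \<Rightarrow> op" where
  "idop L = (\<lambda>s u. if s \<in> states L \<and> s = u then 1 else 0)"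

definition smult_op :: "complex \<Rightarrow> op \<Rightarrow> op" where
  "smult_op c A = (\<lambda>s u. c * A s u)"

definition prodops :: "nat set \<Rightarrow> op list \<Rightarrow> op" where
  "prodops L As = foldr (mult L) As (idop L)"

definition ops :: "nat set \<Rightarrow> op set" where
  "ops L = {A. \<forall>s u. A s u \<noteq> 0 \<longrightarrow> s \<in> states L \<and> u \<in> states L}"

definition op_invertible :: "nat set \<Rightarrow> op \<Rightarrow> bool" where
  "op_invertible L A = (\<exists>B\<in>ops L. mult L A B = idop L \<and> mult L B A = idop L)"

definition opinv :: "nat set \<Rightarrow> op \<Rightarrow> op" where
  "opinv L A = (THE B. B \<in> ops L \<and> mult L A B = idop L \<and> mult L B A = idop L)"

definition emb1 :: "nat \<Rightarrow> (bool \<Rightarrow> bool \<Rightarrow> complex) \<Rightarrow> op" where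
  "emb1 i M = (\<lambda>s u. if (\<forall>k. k \<noteq> i \<longrightarrow> s k = u k) then M (s i) (u i) else 0)"

text \<open>A 4x4 matrix M a b c d (row (a,b), column (c,d)) acting on legs i,j, the
first tensor factor being leg i.  Thus r_{ij} = emb2 i j r and
r_{ji} = P_{ij} r_{ij} P_{ij} = emb2 j i r.\<close>
definition emb2 :: "nat \<Rightarrow> nat \<Rightarrow> (bool \<Rightarrow> bool \<Rightarrow> bool \<Rightarrow> bool \<Rightarrow> complex) \<Rightarrow> op" where
  "emb2 i j M = (\<lambda>s u. if (\<forall>k. k \<noteq> i \<and> k \<noteq> j \<longrightarrow> s k = u k)
      then M (s i) (s j) (u i) (u j) else 0)"

definition ptrace0 :: "nat \<Rightarrow> op \<Rightarrow> op" where
  "ptrace0 n A = (\<lambda>s u. if s \<in> states {1..n} \<and> u \<in> states {1..n}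
      then (\<Sum>b\<in>(UNIV::bool set). A (s(0 := b)) (u(0 := b))) else 0)"

definition rmat :: "complex \<Rightarrow> complex \<Rightarrow> bool \<Rightarrow> bool \<Rightarrow> bool \<Rightarrow> bool \<Rightarrow> complex" where
  "rmat \<kappa> x a b c d = (1 / (1 - \<kappa>^2 * x)) *
     (if a \<and> b \<and> c \<and> d then 1 - \<kappa>^2 * x
      else if a \<and> \<not> b \<and> c \<and> \<not> d then \<kappa> * (1 - x)
      else if a \<and> \<not> b \<and> \<not> c \<and> d then 1 - \<kappa>^2
      else if \<not> a \<and> b \<and> c \<and> \<not> d then (1 - \<kappa>^2) * x
      else if \<not> a \<and> b \<and> \<not> c \<and> d then \<kappa> * (1 - x)
      else if \<not> a \<and> \<not> b \<and> \<not> c \<and> \<not> d then 1 - \<kappa>^2 * x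
      else 0)"

text \<open>check r(x) = r(x) o P\<close>
definition rcheck :: "complex \<Rightarrow> complex \<Rightarrow> bool \<Rightarrow> bool \<Rightarrow> bool \<Rightarrow> bool \<Rightarrow> complex" where
  "rcheck \<kappa> x a b c d = rmat \<kappa> x a b d c"

definition kbar :: "complex \<Rightarrow> complex \<Rightarrow> complex \<Rightarrow> complex \<Rightarrow> bool \<Rightarrow> bool \<Rightarrow> complex" where
  "kbar \<kappa>0 \<upsilon>0 \<psi>0 x a c =
     (\<kappa>0 / ((1 - \<kappa>0 * \<upsilon>0 * x) * (1 + \<kappa>0 * x / \<upsilon>0))) *
     (if a \<and> c then (1/\<kappa>0 - \<kappa>0) * x^2 + (1/\<upsilon>0 - \<upsilon>0) * x
      else if a \<and> \<not> c then \<psi>0 * (1 - x^2)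
      else if \<not> a \<and> c then (1 - x^2) / \<psi>0
      else 1/\<kappa>0 - \<kappa>0 + (1/\<upsilon>0 - \<upsilon>0) * x)"

definition kmat :: "complex \<Rightarrow> complex \<Rightarrow> complex \<Rightarrow> complex \<Rightarrow> bool \<Rightarrow> bool \<Rightarrow> complex" where
  "kmat \<kappa>n \<upsilon>n \<psi>n x a c =
     (\<kappa>n / ((1 - \<kappa>n * \<upsilon>n * x) * (1 + \<kappa>n * x / \<upsilon>n))) *
     (if a \<and> c then 1/\<kappa>n - \<kappa>n + (1/\<upsilon>n - \<upsilon>n) * x
      else if a \<and> \<not> c then (1 - x^2) / \<psi>n
      else if \<not> a \<and> c then \<psi>n * (1 - x^2)
      else (1/\<kappa>n - \<kappa>n) * x^2 + (1/\<upsilon>n - \<upsilon>n) * x)"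

text \<open>theta = diag(kappa^(-1/2), kappa^(1/2)) (any square root; only kappa^(+-1)
survive in theta kbar theta).\<close>
definition theta :: "complex \<Rightarrow> bool \<Rightarrow> bool \<Rightarrow> complex" where
  "theta \<kappa> a c = (if a = c then (if a then 1 / csqrt \<kappa> else csqrt \<kappa>) else 0)"

text \<open>t :: nat => complex, with t j the j-th inhomogeneity (j = 1..n).\<close>

definition Ulist :: "nat \<Rightarrow> complex \<Rightarrow> complex \<Rightarrow> complex \<Rightarrow> complex \<Rightarrow>
    (nat \<Rightarrow> complex) \<Rightarrow> complex \<Rightarrow> op list" where
  "Ulist n \<kappa> \<kappa>n \<upsilon>n \<psi>n t x =
     map (\<lambda>j. emb2 0 j (rmat \<kappa> (x / t j))) [1..<n+1]
     @ [emb1 0 (kmat \<kappa>n \<upsilon>n \<psi>n x)]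
     @ map (\<lambda>j. emb2 j 0 (rmat \<kappa> (x * t j))) (rev [1..<n+1])"

definition transfer :: "nat \<Rightarrow> complex \<Rightarrow> complex \<Rightarrow> complex \<Rightarrow> complex \<Rightarrow>
    complex \<Rightarrow> complex \<Rightarrow> complex \<Rightarrow> (nat \<Rightarrow> complex) \<Rightarrow> complex \<Rightarrow> op" where
  "transfer n \<kappa> \<kappa>0 \<upsilon>0 \<psi>0 \<kappa>n \<upsilon>n \<psi>n t x =
     ptrace0 n (prodops {0..n}
       ([emb1 0 (theta \<kappa>), emb1 0 (kbar \<kappa>0 \<upsilon>0 \<psi>0 (\<kappa>^2 * x)), emb1 0 (theta \<kappa>)]
        @ Ulist n \<kappa> \<kappa>n \<upsilon>n \<psi>n t x))"

text \<open>Transport operator C_{tau_i}(t), with q and a chosen square root qh of q.\<close>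
definition transport :: "nat \<Rightarrow> complex \<Rightarrow> complex \<Rightarrow> complex \<Rightarrow> complex \<Rightarrow>
    complex \<Rightarrow> complex \<Rightarrow> complex \<Rightarrow> complex \<Rightarrow> complex \<Rightarrow> (nat \<Rightarrow> complex) \<Rightarrow> nat \<Rightarrow> op" where
  "transport n \<kappa> \<kappa>0 \<upsilon>0 \<psi>0 \<kappa>n \<upsilon>n \<psi>n q qh t i =
     prodops {1..n}
      (map (\<lambda>j. emb2 j (j+1) (rcheck \<kappa> (t j / t i))) (rev [1..<i])
       @ [emb1 1 (kbar \<kappa>0 \<upsilon>0 \<psi>0 (qh / t i))]
       @ map (\<lambda>j. emb2 j (j+1) (rcheck \<kappa> (q / (t j * t i)))) [1..<i]
       @ map (\<lambda>j. emb2 (j-1) j (rcheck \<kappa> (q / (t i * t j)))) [i+1..<n+1]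
       @ [emb1 n (kmat \<kappa>n \<upsilon>n \<psi>n (q / t i))]
       @ map (\<lambda>j. emb2 (j-1) j (rcheck \<kappa> (q * t j / t i))) (rev [i+1..<n+1]))"

definition Phi_bdy :: "complex \<Rightarrow> complex \<Rightarrow> complex \<Rightarrow> complex \<Rightarrow> complex" where
  "Phi_bdy \<kappa> \<kappa>0 \<upsilon>0 x = \<kappa> *
     ((1 - \<kappa>0 * \<upsilon>0 * x) * (1 + \<kappa>0 * x / \<upsilon>0) * (1 - \<kappa>^4 * x^2)) /
     ((1 - \<kappa>^2 * \<kappa>0 * \<upsilon>0 * x) * (1 + \<kappa>^2 * \<kappa>0 * x / \<upsilon>0) * (1 - \<kappa>^2 * x^2))"

text \<open>Rendering of "generic parameters": every denominator occurring in
T(t_i^{+-1}; t), in C_{tau_i}(t) at q = 1, and in Phi_bdy(t_i^{+-1}) is nonzero.\<close>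
definition nondegenerate :: "nat \<Rightarrow> complex \<Rightarrow> complex \<Rightarrow> complex \<Rightarrow> complex \<Rightarrow>
    complex \<Rightarrow> (nat \<Rightarrow> complex) \<Rightarrow> bool" where
  "nondegenerate n \<kappa> \<kappa>0 \<upsilon>0 \<kappa>n \<upsilon>n t =
    (\<forall>i\<in>{1..n}. \<forall>e\<in>{t i, 1 / t i}.
       (\<forall>j\<in>{1..n}. 1 - \<kappa>^2 * e * t j \<noteq> 0 \<and> 1 - \<kappa>^2 * e / t j \<noteq> 0)
     \<and> (\<forall>y\<in>{\<kappa>^2 * e, 1 / t i}. (1 - \<kappa>0 * \<upsilon>0 * y) * (1 + \<kappa>0 * y / \<upsilon>0) \<noteq> 0)
     \<and> (1 - \<kappa>n * \<upsilon>n * e) * (1 + \<kappa>n * e / \<upsilon>n) \<noteq> 0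
     \<and> (1 - \<kappa>^2 * \<kappa>0 * \<upsilon>0 * e) * (1 + \<kappa>^2 * \<kappa>0 * e / \<upsilon>0) * (1 - \<kappa>^2 * e^2) \<noteq> 0)"

end

theory Submission
  imports Defs
begin


lemma finite_states: "finite L \<Longrightarrow> finite (states L)"
proof -
  assume fL: "finite L"
  have "inj_on (\<lambda>s. {k. s k}) (states L)"
    by (auto simp: inj_on_def states_def fun_eq_iff)
  moreover have "(\<lambda>s. {k. s k}) ` states L \<subseteq> Pow L" by (auto simp: states_def)
  ultimately show ?thesis using fL by (meson finite_Pow_iff finite_subset inj_on_finite)
qed

definition res :: "nat set \<Rightarrow> op \<Rightarrow> op" where
  "res L A = (\<lambda>s u. if s \<in> states L \<and> u \<in> states L then A s u else 0)"

lemma mult_res_left[simp]: "mult L (res L A) B = mult L A B"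
  by (auto simp: mult_def res_def fun_eq_iff intro!: sum.cong)
lemma mult_res_right[simp]: "mult L A (res L B) = mult L A B"
  by (auto simp: mult_def res_def fun_eq_iff intro!: sum.cong)
lemma res_mult[simp]: "res L (mult L A B) = mult L A B"
  by (auto simp: mult_def res_def fun_eq_iff)
lemma res_res[simp]: "res L (res L A) = res L A"
  by (auto simp: res_def fun_eq_iff)
lemma res_idop[simp]: "res L (idop L) = idop L"
  unfolding idop_def res_def by (intro ext) auto
lemma res_prodops[simp]: "res L (prodops L xs) = prodops L xs"
  by (cases xs) (auto simp: prodops_def)

lemma mult_assoc:
  assumes "finite L"
  shows "mult L (mult L A B) C = mult L A (mult L B C)"
proof -
  have "\<And>s u. s \<in> states L \<Longrightarrow> u \<in> states L \<Longrightarrow>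
     (\<Sum>v\<in>states L. (\<Sum>w\<in>states L. A s w * B w v) * C v u) =
     (\<Sum>w\<in>states L. A s w * (\<Sum>v\<in>states L. B w v * C v u))"
    by (simp add: sum_distrib_left sum_distrib_right mult.assoc, rule sum.swap)
  then show ?thesis
    by (auto simp: mult_def fun_eq_iff intro!: sum.cong)
qed

lemma mult_idop_left[simp]: "finite L \<Longrightarrow> mult L (idop L) A = res L A"
proof -
  assume fin: "finite L"
  { fix s u assume s: "s \<in> states L" and u: "u \<in> states L"
    have "(\<Sum>v\<in>states L. (if s \<in> states L \<and> s = v then 1 else 0) * A v u) = A s u"
      using s fin by (simp add: finite_states if_distrib[of "\<lambda>c. c * A _ u"] cong: if_cong) }
  then show ?thesis by (auto simp: mult_def idop_def res_def fun_eq_iff)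
qed

lemma mult_idop_right[simp]: "finite L \<Longrightarrow> mult L A (idop L) = res L A"
proof -
  assume fin: "finite L"
  { fix s u assume s: "s \<in> states L" and u: "u \<in> states L"
    have "(\<Sum>v\<in>states L. A s v * (if v \<in> states L \<and> v = u then 1 else 0)) = A s u"
      using u fin by (simp add: if_distrib finite_states cong: if_cong) }
  then show ?thesis by (auto simp: mult_def idop_def res_def fun_eq_iff)
qed

lemma prodops_Nil[simp]: "prodops L [] = idop L" by (simp add: prodops_def)
lemma prodops_Cons[simp]: "prodops L (x # xs) = mult L x (prodops L xs)" by (simp add: prodops_def)

lemma prodops_append:
  assumes "finite L"
  shows "prodops L (xs @ ys) = mult L (prodops L xs) (prodops L ys)"
  by (induction xs) (simp_all add: mult_assoc[OF assms] assms)

lemma prodops_single[simp]: "finite L \<Longrightarrow> prodops L [x] = res L x" by simp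

lemma smult_mult_left: "mult L (smult_op c A) B = smult_op c (mult L A B)"
  by (auto simp: mult_def smult_op_def fun_eq_iff sum_distrib_left mult.assoc)
lemma smult_mult_right: "mult L A (smult_op c B) = smult_op c (mult L A B)"
  by (auto simp: mult_def smult_op_def fun_eq_iff sum_distrib_left mult.assoc mult.left_commute)
lemma res_smult: "res L (smult_op c A) = smult_op c (res L A)"
  by (auto simp: res_def smult_op_def fun_eq_iff)

lemma sum_support:
  assumes "finite F" "g ` X \<subseteq> F" "inj_on g X" "\<forall>v\<in>F. f v \<noteq> 0 \<longrightarrow> v \<in> g ` X"
  shows "sum f F = sum (\<lambda>x. f (g x)) X"
proof -
  have "sum f F = sum f (g ` X)"
    using assms by (intro sum.mono_neutral_right) auto
  also have "\<dots> = sum (\<lambda>x. f (g x)) X" using assms(3) by (simp add: sum.reindex)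
  finally show ?thesis .
qed

lemma states_upd[simp]: "s \<in> states L \<Longrightarrow> a \<in> L \<Longrightarrow> s(a := p) \<in> states L"
  by (auto simp: states_def)

lemma sum_states_1:
  assumes "finite L" "s \<in> states L" "a \<in> L"
    "\<forall>v\<in>states L. f v \<noteq> 0 \<longrightarrow> (\<forall>k. k \<noteq> a \<longrightarrow> v k = s k)"
  shows "sum f (states L) = (\<Sum>p\<in>UNIV. f (s(a := p)))"
proof (rule sum_support)
  show "finite (states L)" using assms by (simp add: finite_states)
  show "(\<lambda>p. s(a := p)) ` UNIV \<subseteq> states L" using assms by auto
  show "inj_on (\<lambda>p. s(a := p)) UNIV" by (auto simp: inj_on_def fun_eq_iff)
  show "\<forall>v\<in>states L. f v \<noteq> 0 \<longrightarrow> v \<in> range (\<lambda>p. s(a := p))"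
  proof (intro ballI impI)
    fix v assume "v \<in> states L" "f v \<noteq> 0"
    then have "v = s(a := v a)" using assms(4) by (auto simp: fun_eq_iff)
    then show "v \<in> range (\<lambda>p. s(a := p))" by blast
  qed
qed

lemma sum_states_2:
  assumes "finite L" "s \<in> states L" "a \<in> L" "b \<in> L" "a \<noteq> b"
    "\<forall>v\<in>states L. f v \<noteq> 0 \<longrightarrow> (\<forall>k. k \<noteq> a \<and> k \<noteq> b \<longrightarrow> v k = s k)"
  shows "sum f (states L) = (\<Sum>p\<in>UNIV. \<Sum>q\<in>UNIV. f (s(a := p, b := q)))"
proof -
  have "sum f (states L) = (\<Sum>x\<in>UNIV. f ((\<lambda>(p,q). s(a := p, b := q)) x))"
  proof (rule sum_support)
    show "finite (states L)" using assms by (simp add: finite_states)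
    show "(\<lambda>(p,q). s(a := p, b := q)) ` UNIV \<subseteq> states L" using assms by auto
    show "inj_on (\<lambda>(p,q). s(a := p, b := q)) UNIV" using assms(5)
      by (auto simp: inj_on_def fun_eq_iff)
    show "\<forall>v\<in>states L. f v \<noteq> 0 \<longrightarrow> v \<in> range (\<lambda>(p,q). s(a := p, b := q))"
    proof (intro ballI impI)
      fix v assume "v \<in> states L" "f v \<noteq> 0"
      then have "v = (\<lambda>(p,q). s(a := p, b := q)) (v a, v b)" using assms(6) by (auto simp: fun_eq_iff)
      then show "v \<in> range (\<lambda>(p,q). s(a := p, b := q))" by blast
    qed
  qed
  also have "\<dots> = (\<Sum>p\<in>UNIV. \<Sum>q\<in>UNIV. f (s(a := p, b := q)))"
    by (simp add: UNIV_Times_UNIV[symmetric] sum.cartesian_product prod.case_distrib del: UNIV_Times_UNIV)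
  finally show ?thesis .
qed

lemma sum_states_3:
  assumes "finite L" "s \<in> states L" "a \<in> L" "b \<in> L" "c \<in> L" "a \<noteq> b" "a \<noteq> c" "b \<noteq> c"
    "\<forall>v\<in>states L. f v \<noteq> 0 \<longrightarrow> (\<forall>k. k \<noteq> a \<and> k \<noteq> b \<and> k \<noteq> c \<longrightarrow> v k = s k)"
  shows "sum f (states L) = (\<Sum>p\<in>UNIV. \<Sum>q\<in>UNIV. \<Sum>r\<in>UNIV. f (s(a := p, b := q, c := r)))"
proof -
  have "sum f (states L) = (\<Sum>x\<in>UNIV. f ((\<lambda>(p,q,r). s(a := p, b := q, c := r)) x))"
  proof (rule sum_support)
    show "finite (states L)" using assms by (simp add: finite_states)
    show "(\<lambda>(p,q,r). s(a := p, b := q, c := r)) ` UNIV \<subseteq> states L" using assms by auto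
    show "inj_on (\<lambda>(p,q,r). s(a := p, b := q, c := r)) UNIV" using assms(6-8)
      by (auto simp: inj_on_def fun_eq_iff)
    show "\<forall>v\<in>states L. f v \<noteq> 0 \<longrightarrow> v \<in> range (\<lambda>(p,q,r). s(a := p, b := q, c := r))"
    proof (intro ballI impI)
      fix v assume "v \<in> states L" "f v \<noteq> 0"
      then have "v = (\<lambda>(p,q,r). s(a := p, b := q, c := r)) (v a, v b, v c)" using assms(9) by (auto simp: fun_eq_iff)
      then show "v \<in> range (\<lambda>(p,q,r). s(a := p, b := q, c := r))" by blast
    qed
  qed
  also have "\<dots> = (\<Sum>p\<in>UNIV. \<Sum>q\<in>UNIV. \<Sum>r\<in>UNIV. f (s(a := p, b := q, c := r)))"
    by (simp add: UNIV_Times_UNIV[symmetric] sum.cartesian_product prod.case_distrib del: UNIV_Times_UNIV)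
  finally show ?thesis .
qed

definition emb3 :: "nat \<Rightarrow> nat \<Rightarrow> nat \<Rightarrow> (bool \<Rightarrow> bool \<Rightarrow> bool \<Rightarrow> bool \<Rightarrow> bool \<Rightarrow> bool \<Rightarrow> complex) \<Rightarrow> op" where
  "emb3 a b c M = (\<lambda>s u. if (\<forall>k. k \<noteq> a \<and> k \<noteq> b \<and> k \<noteq> c \<longrightarrow> s k = u k)
      then M (s a) (s b) (s c) (u a) (u b) (u c) else 0)"

lemma E1:
  assumes "finite L" "a \<in> L"
  shows "mult L (emb1 a X) (emb1 a Y) = res L (emb1 a (\<lambda>p q. \<Sum>r\<in>UNIV. X p r * Y r q))"
proof (intro ext)
  fix s u
  show "mult L (emb1 a X) (emb1 a Y) s u = res L (emb1 a (\<lambda>p q. \<Sum>r\<in>UNIV. X p r * Y r q)) s u"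
  proof (cases "s \<in> states L \<and> u \<in> states L")
    case True
    then have "(\<Sum>v\<in>states L. emb1 a X s v * emb1 a Y v u) =
        (\<Sum>p\<in>UNIV. emb1 a X s (s(a:=p)) * emb1 a Y (s(a:=p)) u)"
      using assms by (intro sum_states_1) (auto simp: emb1_def split: if_splits)
    also have "\<dots> = emb1 a (\<lambda>p q. \<Sum>r\<in>UNIV. X p r * Y r q) s u"
      by (cases "\<forall>k. k \<noteq> a \<longrightarrow> s k = u k") (simp_all add: emb1_def del: not_all)
    finally show ?thesis using True by (simp add: mult_def res_def)
  qed (auto simp: mult_def res_def)
qed

lemma E2:
  assumes "finite L" "a \<in> L" "b \<in> L" "a \<noteq> b"
  shows "mult L (emb1 a X) (emb2 a b R) = res L (emb2 a b (\<lambda>p1 p2 q1 q2. \<Sum>r\<in>UNIV. X p1 r * R r p2 q1 q2))"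
proof (intro ext)
  fix s u
  show "mult L (emb1 a X) (emb2 a b R) s u = res L (emb2 a b (\<lambda>p1 p2 q1 q2. \<Sum>r\<in>UNIV. X p1 r * R r p2 q1 q2)) s u"
  proof (cases "s \<in> states L \<and> u \<in> states L")
    case True
    then have "(\<Sum>v\<in>states L. emb1 a X s v * emb2 a b R v u) =
        (\<Sum>p\<in>UNIV. emb1 a X s (s(a:=p)) * emb2 a b R (s(a:=p)) u)"
      using assms by (intro sum_states_1) (auto simp: emb1_def split: if_splits)
    also have "\<dots> = emb2 a b (\<lambda>p1 p2 q1 q2. \<Sum>r\<in>UNIV. X p1 r * R r p2 q1 q2) s u"
      using assms(4) by (cases "\<forall>k. k \<noteq> a \<and> k \<noteq> b \<longrightarrow> s k = u k") (simp_all add: emb1_def emb2_def del: not_all)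
    finally show ?thesis using True by (simp add: mult_def res_def)
  qed (auto simp: mult_def res_def)
qed

lemma E22:
  assumes "finite L" "a \<in> L" "b \<in> L" "a \<noteq> b"
  shows "mult L (emb2 a b M) (emb2 a b N) = res L (emb2 a b (\<lambda>p1 p2 q1 q2. \<Sum>r\<in>UNIV. \<Sum>r'\<in>UNIV. M p1 p2 r r' * N r r' q1 q2))"
proof (intro ext)
  fix s u
  show "mult L (emb2 a b M) (emb2 a b N) s u = res L (emb2 a b (\<lambda>p1 p2 q1 q2. \<Sum>r\<in>UNIV. \<Sum>r'\<in>UNIV. M p1 p2 r r' * N r r' q1 q2)) s u"
  proof (cases "s \<in> states L \<and> u \<in> states L")
    case True
    then have "(\<Sum>v\<in>states L. emb2 a b M s v * emb2 a b N v u) =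
        (\<Sum>p\<in>UNIV. \<Sum>q\<in>UNIV. emb2 a b M s (s(a:=p, b:=q)) * emb2 a b N (s(a:=p, b:=q)) u)"
      using assms by (intro sum_states_2) (auto simp: emb2_def split: if_splits)
    also have "\<dots> = emb2 a b (\<lambda>p1 p2 q1 q2. \<Sum>r\<in>UNIV. \<Sum>r'\<in>UNIV. M p1 p2 r r' * N r r' q1 q2) s u"
      using assms(4) by (cases "\<forall>k. k \<noteq> a \<and> k \<noteq> b \<longrightarrow> s k = u k") (simp_all add: emb2_def del: not_all)
    finally show ?thesis using True by (simp add: mult_def res_def)
  qed (auto simp: mult_def res_def)
qed

lemma E33:
  assumes "finite L" "a \<in> L" "b \<in> L" "c \<in> L" "a \<noteq> b" "a \<noteq> c" "b \<noteq> c"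
  shows "mult L (emb3 a b c M) (emb3 a b c N) = res L (emb3 a b c (\<lambda>p1 p2 p3 q1 q2 q3.
     \<Sum>r\<in>UNIV. \<Sum>r'\<in>UNIV. \<Sum>r''\<in>UNIV. M p1 p2 p3 r r' r'' * N r r' r'' q1 q2 q3))"
proof (intro ext)
  fix s u
  show "mult L (emb3 a b c M) (emb3 a b c N) s u = res L (emb3 a b c (\<lambda>p1 p2 p3 q1 q2 q3.
     \<Sum>r\<in>UNIV. \<Sum>r'\<in>UNIV. \<Sum>r''\<in>UNIV. M p1 p2 p3 r r' r'' * N r r' r'' q1 q2 q3)) s u"
  proof (cases "s \<in> states L \<and> u \<in> states L")
    case True
    then have "(\<Sum>v\<in>states L. emb3 a b c M s v * emb3 a b c N v u) =
        (\<Sum>p\<in>UNIV. \<Sum>q\<in>UNIV. \<Sum>r\<in>UNIV. emb3 a b c M s (s(a:=p, b:=q, c:=r)) * emb3 a b c N (s(a:=p, b:=q, c:=r)) u)"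
      using assms by (intro sum_states_3) (auto simp: emb3_def split: if_splits)
    also have "\<dots> = emb3 a b c (\<lambda>p1 p2 p3 q1 q2 q3.
     \<Sum>r\<in>UNIV. \<Sum>r'\<in>UNIV. \<Sum>r''\<in>UNIV. M p1 p2 p3 r r' r'' * N r r' r'' q1 q2 q3) s u"
      using assms(5-7) by (cases "\<forall>k. k \<noteq> a \<and> k \<noteq> b \<and> k \<noteq> c \<longrightarrow> s k = u k") (simp_all add: emb3_def del: not_all)
    finally show ?thesis using True by (simp add: mult_def res_def)
  qed (auto simp: mult_def res_def)
qed

definition sw :: "nat \<Rightarrow> nat \<Rightarrow> state \<Rightarrow> state" where
  "sw a b s = s(a := s b, b := s a)"
definition tr :: "nat \<Rightarrow> nat \<Rightarrow> nat \<Rightarrow> nat" where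
  "tr a b k = (if k = a then b else if k = b then a else k)"
definition Pop :: "nat set \<Rightarrow> nat \<Rightarrow> nat \<Rightarrow> op" where
  "Pop L a b = res L (\<lambda>s u. if u = sw a b s then 1 else 0)"
definition cnj :: "nat \<Rightarrow> nat \<Rightarrow> op \<Rightarrow> op" where
  "cnj a b A = (\<lambda>s u. A (sw a b s) (sw a b u))"

lemma sw_apply: "sw a b s k = s (tr a b k)"
  by (auto simp: sw_def tr_def)
lemma sw_sw[simp]: "sw a b (sw a b s) = s"
  by (auto simp: sw_def fun_eq_iff)
lemma tr_tr[simp]: "tr a b (tr a b k) = k"
  by (auto simp: tr_def)
lemma sw_states: "a \<in> L \<Longrightarrow> b \<in> L \<Longrightarrow> (sw a b s \<in> states L) = (s \<in> states L)"
  by (auto simp: states_def sw_def)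
lemma sw_comm: "sw a b = sw b a"
  by (auto simp: sw_def fun_eq_iff)
lemma Pop_comm: "Pop L a b = Pop L b a"
  by (simp add: Pop_def sw_comm)

lemma PL:
  assumes "finite L" "a \<in> L" "b \<in> L"
  shows "mult L (Pop L a b) A = res L (\<lambda>s u. A (sw a b s) u)"
proof (intro ext)
  fix s u
  have "s \<in> states L \<Longrightarrow> (\<Sum>v\<in>states L. (if s \<in> states L \<and> v \<in> states L then if v = sw a b s then 1 else 0 else 0) * A v u) = A (sw a b s) u"
    using assms by (simp add: finite_states sw_states if_distrib[of "\<lambda>c. c * A _ u"] cong: if_cong)
  then show "mult L (Pop L a b) A s u = res L (\<lambda>s u. A (sw a b s) u) s u"
    by (simp add: mult_def res_def Pop_def)
qed

lemma PR:
  assumes "finite L" "a \<in> L" "b \<in> L"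
  shows "mult L A (Pop L a b) = res L (\<lambda>s u. A s (sw a b u))"
proof (intro ext)
  fix s u
  have e: "\<And>v. (u = sw a b v) = (v = sw a b u)" by auto
  have "u \<in> states L \<Longrightarrow> (\<Sum>v\<in>states L. A s v * (if v \<in> states L \<and> u \<in> states L then if u = sw a b v then 1 else 0 else 0)) = A s (sw a b u)"
    using assms by (simp add: e finite_states sw_states if_distrib[of "\<lambda>c. A s _ * c"] cong: if_cong)
  then show "mult L A (Pop L a b) s u = res L (\<lambda>s u. A s (sw a b u)) s u"
    by (simp add: mult_def res_def Pop_def)
qed

lemma P_comm:
  assumes "finite L" "a \<in> L" "b \<in> L"
  shows "mult L (Pop L a b) A = mult L (cnj a b A) (Pop L a b)"
  using assms by (simp add: PL PR cnj_def)

lemma PP: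
  assumes "finite L" "a \<in> L" "b \<in> L"
  shows "mult L (Pop L a b) (Pop L a b) = idop L"
proof -
  have "mult L (Pop L a b) (Pop L a b) = res L (\<lambda>s u. Pop L a b (sw a b s) u)" by (rule PL[OF assms])
  also have "\<dots> = idop L"
    unfolding Pop_def res_def idop_def using assms by (intro ext) (auto simp: sw_states)
  finally show ?thesis .
qed

lemma cnj_res: "a \<in> L \<Longrightarrow> b \<in> L \<Longrightarrow> cnj a b (res L A) = res L (cnj a b A)"
  by (auto simp: cnj_def res_def sw_states fun_eq_iff)

lemma PXP:
  assumes "finite L" "a \<in> L" "b \<in> L"
  shows "mult L (Pop L a b) (mult L X (Pop L a b)) = res L (cnj a b X)"
  using assms by (simp add: PL PR cnj_def res_def sw_states fun_eq_iff)

lemma cnj_mult: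
  assumes "finite L" "a \<in> L" "b \<in> L"
  shows "cnj a b (mult L A B) = mult L (cnj a b A) (cnj a b B)"
proof (intro ext)
  fix s u
  have "(\<Sum>v\<in>states L. A (sw a b s) v * B v (sw a b u)) = (\<Sum>v\<in>states L. A (sw a b s) (sw a b v) * B (sw a b v) (sw a b u))"
    by (rule sum.reindex_bij_witness[of _ "sw a b" "sw a b"]) (use assms in \<open>auto simp: sw_states\<close>)
  then show "cnj a b (mult L A B) s u = mult L (cnj a b A) (cnj a b B) s u"
    using assms by (simp add: cnj_def mult_def sw_states)
qed

lemma sw_inj[simp]: "(sw a b s = sw a b u) = (s = u)" by (metis sw_sw)

lemma cnj_idop: "a \<in> L \<Longrightarrow> b \<in> L \<Longrightarrow> cnj a b (idop L) = idop L"
  unfolding cnj_def idop_def by (intro ext) (simp add: sw_states)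

lemma cnj_prodops:
  assumes "finite L" "a \<in> L" "b \<in> L"
  shows "cnj a b (prodops L xs) = prodops L (map (cnj a b) xs)"
  by (induction xs) (simp_all add: cnj_mult cnj_idop assms)

lemma cnj_smult: "cnj a b (smult_op c A) = smult_op c (cnj a b A)"
  by (simp add: cnj_def smult_op_def)

lemma tr_ex: "(\<forall>k. P (tr a b k)) = (\<forall>k. P k)"
  by (metis tr_tr)

lemma cnj_emb1: "cnj a b (emb1 c M) = emb1 (tr a b c) M"
proof -
  have e: "\<And>s u. (\<forall>k. k \<noteq> c \<longrightarrow> s (tr a b k) = u (tr a b k)) = (\<forall>k. k \<noteq> tr a b c \<longrightarrow> s k = u k)"
    using tr_ex[of "\<lambda>k. k \<noteq> tr a b c \<longrightarrow> _ k = _ k" a b] by (metis tr_tr)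
  then show ?thesis unfolding cnj_def emb1_def sw_apply by (intro ext) (simp only: e)
qed

lemma cnj_emb2: "cnj a b (emb2 c d M) = emb2 (tr a b c) (tr a b d) M"
proof -
  have e: "\<And>s u. (\<forall>k. k \<noteq> c \<and> k \<noteq> d \<longrightarrow> s (tr a b k) = u (tr a b k)) = (\<forall>k. k \<noteq> tr a b c \<and> k \<noteq> tr a b d \<longrightarrow> s k = u k)"
    using tr_ex[of "\<lambda>k. k \<noteq> tr a b c \<and> k \<noteq> tr a b d \<longrightarrow> _ k = _ k" a b] by (metis tr_tr)
  then show ?thesis unfolding cnj_def emb2_def sw_apply by (intro ext) (simp only: e)
qed

lemma rcheck_P:
  assumes "finite L" "a \<in> L" "b \<in> L" "a \<noteq> b"
  shows "res L (emb2 a b (rcheck \<kappa> y)) = mult L (emb2 a b (rmat \<kappa> y)) (Pop L a b)"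
  using assms by (auto simp: PR emb2_def rcheck_def res_def sw_def fun_eq_iff)

lemma rmat1:
  assumes "\<kappa>^2 \<noteq> 1" "a \<in> L" "b \<in> L" "a \<noteq> b"
  shows "res L (emb2 a b (rmat \<kappa> 1)) = Pop L a b"
proof -
  have k: "1 - \<kappa>^2 \<noteq> 0" using assms(1) by auto
  have r: "rmat \<kappa> 1 p q p' q' = (if p = q' \<and> q = p' then 1 else 0)" for p q p' q'
    using k by (simp add: rmat_def)
  have e: "\<And>s u. ((\<forall>k. k \<noteq> a \<and> k \<noteq> b \<longrightarrow> s k = u k) \<and> s a = u b \<and> s b = u a) = (u = sw a b s)"
    using assms(4) by (auto simp: sw_def fun_eq_iff)
  then show ?thesis unfolding res_def Pop_def emb2_def r
    apply (intro ext)
    subgoal for s u using e[of s u]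
      by (cases "\<forall>k. k \<noteq> a \<and> k \<noteq> b \<longrightarrow> s k = u k"; cases "s a = u b \<and> s b = u a"; auto simp del: not_all)
    done
qed

lemma emb2_flip: "a \<noteq> b \<Longrightarrow> emb2 b a R = emb2 a b (\<lambda>p q p' q'. R q p q' p')"
  by (auto simp: emb2_def fun_eq_iff)

lemma emb2_id:
  assumes "a \<noteq> b"
  shows "res L (emb2 a b (\<lambda>p q p' q'. if p = p' \<and> q = q' then 1 else 0)) = idop L"
proof -
  have e: "\<And>s u. ((\<forall>k. k \<noteq> a \<and> k \<noteq> b \<longrightarrow> s k = u k) \<and> s a = u a \<and> s b = u b) = (s = u)"
    by (auto simp: fun_eq_iff)
  then show ?thesis unfolding res_def idop_def emb2_def
    apply (intro ext)
    subgoal for s u using e[of s u]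
      by (cases "\<forall>k. k \<noteq> a \<and> k \<noteq> b \<longrightarrow> s k = u k"; cases "s a = u a \<and> s b = u b"; auto simp del: not_all)
    done
qed

lemma emb1_id:
  shows "res L (emb1 a (\<lambda>p p'. if p = p' then 1 else 0)) = idop L"
proof -
  have e: "\<And>s u. ((\<forall>k. k \<noteq> a \<longrightarrow> s k = u k) \<and> s a = u a) = (s = u)"
    by (auto simp: fun_eq_iff)
  then show ?thesis unfolding res_def idop_def emb1_def
    apply (intro ext)
    subgoal for s u using e[of s u]
      by (cases "\<forall>k. k \<noteq> a \<longrightarrow> s k = u k"; cases "s a = u a"; simp del: not_all)
    done
qed

definition locL :: "nat set \<Rightarrow> nat set \<Rightarrow> op \<Rightarrow> bool" where
  "locL L S A = ((\<forall>s u. A s u \<noteq> 0 \<longrightarrow> (\<forall>k. k \<notin> S \<longrightarrow> s k = u k)) \<and>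
     (\<forall>s u s' u'. s \<in> states L \<longrightarrow> u \<in> states L \<longrightarrow> s' \<in> states L \<longrightarrow> u' \<in> states L \<longrightarrow>
        (\<forall>k. k \<notin> S \<longrightarrow> s k = u k) \<longrightarrow> (\<forall>k. k \<notin> S \<longrightarrow> s' k = u' k) \<longrightarrow>
        (\<forall>k\<in>S. s k = s' k \<and> u k = u' k) \<longrightarrow> A s u = A s' u'))"

lemma locL_supp: "locL L S A \<Longrightarrow> A s u \<noteq> 0 \<Longrightarrow> k \<notin> S \<Longrightarrow> s k = u k"
  by (auto simp: locL_def)
lemma locL_dep: "locL L S A \<Longrightarrow> s \<in> states L \<Longrightarrow> u \<in> states L \<Longrightarrow> s' \<in> states L \<Longrightarrow> u' \<in> states L \<Longrightarrow>
        (\<And>k. k \<notin> S \<Longrightarrow> s k = u k) \<Longrightarrow> (\<And>k. k \<notin> S \<Longrightarrow> s' k = u' k) \<Longrightarrow>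
        (\<And>k. k\<in>S \<Longrightarrow> s k = s' k) \<Longrightarrow> (\<And>k. k\<in>S \<Longrightarrow> u k = u' k) \<Longrightarrow> A s u = A s' u'"
proof -
  assume l: "locL L S A" and a: "s \<in> states L" "u \<in> states L" "s' \<in> states L" "u' \<in> states L"
    and h1: "\<And>k. k \<notin> S \<Longrightarrow> s k = u k" and h2: "\<And>k. k \<notin> S \<Longrightarrow> s' k = u' k"
    and h3: "\<And>k. k\<in>S \<Longrightarrow> s k = s' k" and h4: "\<And>k. k\<in>S \<Longrightarrow> u k = u' k"
  have H: "(\<forall>k. k \<notin> S \<longrightarrow> s k = u k)" "(\<forall>k. k \<notin> S \<longrightarrow> s' k = u' k)" "(\<forall>k\<in>S. s k = s' k \<and> u k = u' k)"
    using h1 h2 h3 h4 by auto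
  from l have "\<forall>s u s' u'. s \<in> states L \<longrightarrow> u \<in> states L \<longrightarrow> s' \<in> states L \<longrightarrow> u' \<in> states L \<longrightarrow>
        (\<forall>k. k \<notin> S \<longrightarrow> s k = u k) \<longrightarrow> (\<forall>k. k \<notin> S \<longrightarrow> s' k = u' k) \<longrightarrow>
        (\<forall>k\<in>S. s k = s' k \<and> u k = u' k) \<longrightarrow> A s u = A s' u'" unfolding locL_def by (rule conjunct2)
  then have "s \<in> states L \<longrightarrow> u \<in> states L \<longrightarrow> s' \<in> states L \<longrightarrow> u' \<in> states L \<longrightarrow>
        (\<forall>k. k \<notin> S \<longrightarrow> s k = u k) \<longrightarrow> (\<forall>k. k \<notin> S \<longrightarrow> s' k = u' k) \<longrightarrow>
        (\<forall>k\<in>S. s k = s' k \<and> u k = u' k) \<longrightarrow> A s u = A s' u'" by blast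
  then show ?thesis using a H by blast
qed

lemma locL_intro:
  assumes "\<And>s u k. A s u \<noteq> 0 \<Longrightarrow> k \<notin> S \<Longrightarrow> s k = u k"
    and "\<And>s u s' u'. s \<in> states L \<Longrightarrow> u \<in> states L \<Longrightarrow> s' \<in> states L \<Longrightarrow> u' \<in> states L \<Longrightarrow>
        (\<forall>k. k \<notin> S \<longrightarrow> s k = u k) \<Longrightarrow> (\<forall>k. k \<notin> S \<longrightarrow> s' k = u' k) \<Longrightarrow>
        (\<forall>k\<in>S. s k = s' k \<and> u k = u' k) \<Longrightarrow> A s u = A s' u'"
  shows "locL L S A"
  unfolding locL_def using assms by blast

lemma loc_emb1: "a \<in> S \<Longrightarrow> locL L S (emb1 a M)"
proof (rule locL_intro)
  fix s u k assume "a \<in> S" "emb1 a M s u \<noteq> 0" "k \<notin> S"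
  then show "s k = u k" by (auto simp: emb1_def split: if_splits)
next
  fix s u s' u' :: state
  assume a: "a \<in> S" and h: "\<forall>k. k \<notin> S \<longrightarrow> s k = u k" "\<forall>k. k \<notin> S \<longrightarrow> s' k = u' k" "\<forall>k\<in>S. s k = s' k \<and> u k = u' k"
  have e: "(\<forall>k. k \<noteq> a \<longrightarrow> s k = u k) = (\<forall>k. k \<noteq> a \<longrightarrow> s' k = u' k)"
    using h by metis
  have q: "s a = s' a" "u a = u' a" using h a by auto
  show "emb1 a M s u = emb1 a M s' u'" unfolding emb1_def e by (simp only: q)
qed

lemma loc_emb2: "a \<in> S \<Longrightarrow> b \<in> S \<Longrightarrow> locL L S (emb2 a b M)"
proof (rule locL_intro)
  fix s u k assume "a \<in> S" "b \<in> S" "emb2 a b M s u \<noteq> 0" "k \<notin> S"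
  then show "s k = u k" by (auto simp: emb2_def split: if_splits)
next
  fix s u s' u' :: state
  assume a: "a \<in> S" "b \<in> S" and h: "\<forall>k. k \<notin> S \<longrightarrow> s k = u k" "\<forall>k. k \<notin> S \<longrightarrow> s' k = u' k" "\<forall>k\<in>S. s k = s' k \<and> u k = u' k"
  have e: "(\<forall>k. k \<noteq> a \<and> k \<noteq> b \<longrightarrow> s k = u k) = (\<forall>k. k \<noteq> a \<and> k \<noteq> b \<longrightarrow> s' k = u' k)"
    using h by metis
  have q: "s a = s' a" "u a = u' a" "s b = s' b" "u b = u' b" using h a by auto
  show "emb2 a b M s u = emb2 a b M s' u'" unfolding emb2_def e by (simp only: q)
qed

lemma loc_res: assumes "locL L S A" shows "locL L S (res L A)"
proof (rule locL_intro)
  fix s u k assume "res L A s u \<noteq> 0" "k \<notin> S"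
  then show "s k = u k" using locL_supp[OF assms] by (auto simp: res_def split: if_splits)
next
  fix s u s' u' :: state
  assume a: "s \<in> states L" "u \<in> states L" "s' \<in> states L" "u' \<in> states L"
    and h: "\<forall>k. k \<notin> S \<longrightarrow> s k = u k" "\<forall>k. k \<notin> S \<longrightarrow> s' k = u' k" "\<forall>k\<in>S. s k = s' k \<and> u k = u' k"
  have "A s u = A s' u'" by (rule locL_dep[OF assms a]) (use h in auto)
  then show "res L A s u = res L A s' u'" using a by (simp add: res_def)
qed

lemma loc_idop: "locL L S (idop L)"
proof (rule locL_intro)
  fix s u k assume "idop L s u \<noteq> 0" "k \<notin> S"
  then show "s k = u k" by (auto simp: idop_def split: if_splits)
next
  fix s u s' u' :: state
  assume a: "s \<in> states L" "u \<in> states L" "s' \<in> states L" "u' \<in> states L"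
    and h: "\<forall>k. k \<notin> S \<longrightarrow> s k = u k" "\<forall>k. k \<notin> S \<longrightarrow> s' k = u' k" "\<forall>k\<in>S. s k = s' k \<and> u k = u' k"
  have "(s = u) = (s' = u')"
  proof
    assume e: "s = u" show "s' = u'"
    proof
      fix k show "s' k = u' k" using h e by (cases "k \<in> S") auto
    qed
  next
    assume e: "s' = u'" show "s = u"
    proof
      fix k show "s k = u k" using h e by (cases "k \<in> S") auto
    qed
  qed
  then show "idop L s u = idop L s' u'" using a by (simp add: idop_def)
qed

lemma loc_mono: "locL L S A \<Longrightarrow> S \<subseteq> S' \<Longrightarrow> locL L S' A"
  unfolding locL_def
  apply (intro conjI allI impI)
   apply blast
  apply (smt (verit) subsetD)
  done

lemma loc_mult:
  assumes fin: "finite L" and A: "locL L S A" and B: "locL L S B"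
  shows "locL L S (mult L A B)"
proof -
  have supp: "\<forall>s u. mult L A B s u \<noteq> 0 \<longrightarrow> (\<forall>k. k \<notin> S \<longrightarrow> s k = u k)"
  proof (intro allI impI)
    fix s u k assume "mult L A B s u \<noteq> 0" "k \<notin> S"
    then have "(\<Sum>v\<in>states L. A s v * B v u) \<noteq> 0" by (auto simp: mult_def split: if_splits)
    then obtain v where "v \<in> states L" "A s v * B v u \<noteq> 0" by (rule sum.not_neutral_contains_not_neutral)
    then have "A s v \<noteq> 0" "B v u \<noteq> 0" by auto
    then show "s k = u k" using A B \<open>k \<notin> S\<close> by (metis locL_supp)
  qed
  have dep: "mult L A B s u = mult L A B s' u'"
    if s: "s \<in> states L" and u: "u \<in> states L" and s': "s' \<in> states L" and u': "u' \<in> states L"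
      and su: "\<forall>k. k \<notin> S \<longrightarrow> s k = u k" and su': "\<forall>k. k \<notin> S \<longrightarrow> s' k = u' k"
      and same: "\<forall>k\<in>S. s k = s' k \<and> u k = u' k" for s u s' u'
  proof -
    define V where "V = (\<lambda>s. {v \<in> states L. \<forall>k. k \<notin> S \<longrightarrow> v k = s k})"
    define h where "h = (\<lambda>s' v. (\<lambda>k. if k \<in> S then v k else s' k) :: state)"
    have fV: "finite (states L)" using fin by (simp add: finite_states)
    have r1: "(\<Sum>v\<in>states L. A x v * B v y) = (\<Sum>v\<in>V x. A x v * B v y)" for x y
    proof (rule sum.mono_neutral_right[OF fV])
      show "V x \<subseteq> states L" by (auto simp: V_def)
      show "\<forall>i\<in>states L - V x. A x i * B i y = 0"
      proof
        fix v assume v: "v \<in> states L - V x"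
        show "A x v * B v y = 0"
        proof (rule ccontr)
          assume "A x v * B v y \<noteq> 0"
          then have "A x v \<noteq> 0" by auto
          then have "\<forall>k. k \<notin> S \<longrightarrow> v k = x k" using locL_supp[OF A] by metis
          then show False using v by (auto simp: V_def)
        qed
      qed
    qed
    have hst: "x \<in> states L \<Longrightarrow> v \<in> states L \<Longrightarrow> h x v \<in> states L" for x v
      by (auto simp: h_def states_def)
    have "(\<Sum>v\<in>V s. A s v * B v u) = (\<Sum>v\<in>V s'. A s' v * B v u')"
    proof (rule sum.reindex_bij_witness[of _ "h s" "h s'"])
      fix v assume v: "v \<in> V s"
      show "h s (h s' v) = v" using v by (auto simp: h_def V_def)
      show "h s' v \<in> V s'" using v s' hst[of s' v] by (auto simp: h_def V_def)
      have "A s' (h s' v) = A s v"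
        by (rule locL_dep[OF A s' _ s]) (use v s' su su' same hst[of s' v] in \<open>auto simp: h_def V_def\<close>)
      moreover have "B (h s' v) u' = B v u"
        by (rule locL_dep[OF B _ u' _ u]) (use v s' su su' same hst[of s' v] in \<open>auto simp: h_def V_def\<close>)
      ultimately show "A s' (h s' v) * B (h s' v) u' = A s v * B v u" by simp
    next
      fix v assume v: "v \<in> V s'"
      show "h s' (h s v) = v" using v by (auto simp: h_def V_def)
      show "h s v \<in> V s" using v s hst[of s v] by (auto simp: h_def V_def)
    qed
    then show ?thesis using s u s' u' r1 by (simp add: mult_def)
  qed
  show ?thesis using supp dep unfolding locL_def by blast
qed

lemma loc_prodops: "finite L \<Longrightarrow> \<forall>x\<in>set xs. locL L S x \<Longrightarrow> locL L S (prodops L xs)"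
  by (induction xs) (auto intro: loc_mult loc_idop)

lemma loc_commute:
  assumes fin: "finite L" and A: "locL L S A" and B: "locL L T B" and dis: "S \<inter> T = {}"
  shows "mult L A B = mult L B A"
proof (intro ext)
  fix s u
  show "mult L A B s u = mult L B A s u"
  proof (cases "s \<in> states L \<and> u \<in> states L")
    case False then show ?thesis by (auto simp: mult_def)
  next
    case True
    then have s: "s \<in> states L" and u: "u \<in> states L" by auto
    have fV: "finite (states L)" using fin by (simp add: finite_states)
    define v0 where "v0 = (\<lambda>k. if k \<in> S then u k else s k)"
    define w0 where "w0 = (\<lambda>k. if k \<in> T then u k else s k)"
    have v0s: "v0 \<in> states L" using s u by (auto simp: v0_def states_def)
    have w0s: "w0 \<in> states L" using s u by (auto simp: w0_def states_def)
    have l: "(\<Sum>v\<in>states L. A s v * B v u) = (\<Sum>v\<in>{v0}. A s v * B v u)"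
    proof (rule sum.mono_neutral_right[OF fV])
      show "{v0} \<subseteq> states L" using v0s by auto
      show "\<forall>v\<in>states L - {v0}. A s v * B v u = 0"
      proof (intro ballI)
        fix v assume v: "v \<in> states L - {v0}"
        show "A s v * B v u = 0"
        proof (rule ccontr)
          assume "A s v * B v u \<noteq> 0"
          then have a: "A s v \<noteq> 0" and b: "B v u \<noteq> 0" by auto
          have "v = v0"
          proof
            fix k show "v k = v0 k"
              using locL_supp[OF A a, of k] locL_supp[OF B b, of k] dis by (auto simp: v0_def)
          qed
          then show False using v by auto
        qed
      qed
    qed
    have r: "(\<Sum>v\<in>states L. B s v * A v u) = (\<Sum>v\<in>{w0}. B s v * A v u)"
    proof (rule sum.mono_neutral_right[OF fV])
      show "{w0} \<subseteq> states L" using w0s by auto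
      show "\<forall>v\<in>states L - {w0}. B s v * A v u = 0"
      proof (intro ballI)
        fix v assume v: "v \<in> states L - {w0}"
        show "B s v * A v u = 0"
        proof (rule ccontr)
          assume "B s v * A v u \<noteq> 0"
          then have b: "B s v \<noteq> 0" and a: "A v u \<noteq> 0" by auto
          have "v = w0"
          proof
            fix k show "v k = w0 k"
              using locL_supp[OF A a, of k] locL_supp[OF B b, of k] dis by (auto simp: w0_def)
          qed
          then show False using v by auto
        qed
      qed
    qed
    have "A s v0 * B v0 u = B s w0 * A w0 u"
    proof (cases "\<forall>k. k \<notin> S \<and> k \<notin> T \<longrightarrow> s k = u k")
      case True
      have 1: "A s v0 = A w0 u"
        by (rule locL_dep[OF A s v0s w0s u]) (use True dis in \<open>auto simp: v0_def w0_def\<close>)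
      have 2: "B v0 u = B s w0"
        by (rule locL_dep[OF B v0s u s w0s]) (use True dis in \<open>auto simp: v0_def w0_def\<close>)
      show ?thesis using 1 2 by simp
    next
      case False
      then obtain k where k: "k \<notin> S" "k \<notin> T" "s k \<noteq> u k" by auto
      have "B v0 u = 0"
      proof (rule ccontr)
        assume "B v0 u \<noteq> 0"
        then have "v0 k = u k" using locL_supp[OF B] k(2) by blast
        then show False using k by (simp add: v0_def)
      qed
      moreover have "A w0 u = 0"
      proof (rule ccontr)
        assume "A w0 u \<noteq> 0"
        then have "w0 k = u k" using locL_supp[OF A] k(1) by blast
        then show False using k by (simp add: w0_def)
      qed
      ultimately show ?thesis by simp
    qed
    then show ?thesis using l r True by (simp add: mult_def)
  qed
qed

lemma sum_states_insert:
  assumes "finite L" "a \<notin> L"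
  shows "sum f (states (insert a L)) = (\<Sum>w\<in>states L. \<Sum>b\<in>UNIV. f (w(a := b)))"
proof -
  have "sum f (states (insert a L)) = (\<Sum>x\<in>states L \<times> UNIV. f ((\<lambda>(w,b). w(a := b)) x))"
  proof (rule sum_support)
    show "finite (states (insert a L))" using assms by (simp add: finite_states)
    show "(\<lambda>(w,b). w(a := b)) ` (states L \<times> UNIV) \<subseteq> states (insert a L)"
      by (auto simp: states_def)
    show "inj_on (\<lambda>(w,b). w(a := b)) (states L \<times> UNIV)"
    proof (rule inj_onI, clarsimp)
      fix w b w' b' assume w: "w \<in> states L" "w' \<in> states L" and e: "w(a := b) = w'(a := b')"
      have "b = b'" using fun_cong[OF e, of a] by simp
      moreover have "w = w'"
      proof
        fix k show "w k = w' k"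
          using fun_cong[OF e, of k] w assms(2) by (cases "k = a") (auto simp: states_def)
      qed
      ultimately show "w = w' \<and> b = b'" by simp
    qed
    show "\<forall>v\<in>states (insert a L). f v \<noteq> 0 \<longrightarrow> v \<in> (\<lambda>(w,b). w(a := b)) ` (states L \<times> UNIV)"
    proof (intro ballI impI)
      fix v assume v: "v \<in> states (insert a L)"
      have "v = (\<lambda>(w,b). w(a := b)) (v(a := False), v a)" by auto
      moreover have "v(a := False) \<in> states L" using v by (auto simp: states_def)
      ultimately show "v \<in> (\<lambda>(w,b). w(a := b)) ` (states L \<times> UNIV)" by blast
    qed
  qed
  also have "\<dots> = (\<Sum>w\<in>states L. \<Sum>b\<in>UNIV. f (w(a := b)))"
    by (simp add: sum.cartesian_product prod.case_distrib)
  finally show ?thesis .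
qed

lemma L0_eq: "{0..n} = insert (0::nat) {1..n}" by auto

lemma sum_states_L0:
  "sum f (states {0..n}) = (\<Sum>w\<in>states {1..n}. \<Sum>b\<in>UNIV. f (w(0 := b)))"
  by (simp only: L0_eq) (rule sum_states_insert, auto)

lemma states1_upd0: "s \<in> states {1..n} \<Longrightarrow> s(0 := b) \<in> states {0..n}"
  by (auto simp: states_def)
lemma states1_0: "s \<in> states {1..n} \<Longrightarrow> s 0 = False"
  by (auto simp: states_def)
lemma states1_sub: "s \<in> states {1..n} \<Longrightarrow> s \<in> states {0..n}"
  by (auto simp: states_def)

lemma Z0:
  assumes Z: "locL {0..n} S Z" and S: "0 \<notin> S" and w: "w \<in> states {1..n}" and u: "u \<in> states {1..n}"
  shows "Z (w(0 := b)) (u(0 := b')) = (if b = b' then Z w u else 0)"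
proof (cases "b = b'")
  case False
  have "Z (w(0 := b)) (u(0 := b')) = 0"
  proof (rule ccontr)
    assume "Z (w(0 := b)) (u(0 := b')) \<noteq> 0"
    from locL_supp[OF Z this S] show False using False by simp
  qed
  then show ?thesis using False by simp
next
  case True
  show ?thesis
  proof (cases "\<forall>k. k \<notin> S \<longrightarrow> w k = u k")
    case T2: True
    have "Z (w(0 := b)) (u(0 := b)) = Z w u"
      by (rule locL_dep[OF Z]) (use w u T2 S in \<open>auto simp: states1_upd0 states1_sub states1_0\<close>)
    then show ?thesis using True by simp
  next
    case F2: False
    then obtain k where k: "k \<notin> S" "w k \<noteq> u k" by auto
    have "Z w u = 0" using locL_supp[OF Z _ k(1)] k(2) by blast
    moreover have "Z (w(0 := b)) (u(0 := b)) = 0"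
      using locL_supp[OF Z _ k(1), of "w(0 := b)" "u(0 := b)"] k S states1_0[OF w] states1_0[OF u] by (cases "k = 0") auto
    ultimately show ?thesis using True by simp
  qed
qed

lemma T2:
  assumes Z: "locL {0..n} S Z" and S: "0 \<notin> S"
  shows "ptrace0 n (mult {0..n} X Z) = mult {1..n} (ptrace0 n X) Z"
proof (intro ext)
  fix s u
  show "ptrace0 n (mult {0..n} X Z) s u = mult {1..n} (ptrace0 n X) Z s u"
  proof (cases "s \<in> states {1..n} \<and> u \<in> states {1..n}")
    case False then show ?thesis by (auto simp: ptrace0_def mult_def)
  next
    case True
    then have s: "s \<in> states {1..n}" and u: "u \<in> states {1..n}" by auto
    have "ptrace0 n (mult {0..n} X Z) s u =
      (\<Sum>b\<in>UNIV. \<Sum>w\<in>states {1..n}. \<Sum>b'\<in>UNIV. X (s(0:=b)) (w(0:=b')) * Z (w(0:=b')) (u(0:=b)))"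
      using s u by (simp add: ptrace0_def mult_def states1_upd0 sum_states_L0)
    also have "\<dots> = (\<Sum>b\<in>UNIV. \<Sum>w\<in>states {1..n}. X (s(0:=b)) (w(0:=b)) * Z w u)"
    proof (intro sum.cong refl)
      fix b w assume w: "w \<in> states {1..n}"
      show "(\<Sum>b'\<in>UNIV. X (s(0:=b)) (w(0:=b')) * Z (w(0:=b')) (u(0:=b))) = X (s(0:=b)) (w(0:=b)) * Z w u"
        using Z0[OF Z S w u] by (simp add: UNIV_bool)
    qed
    also have "\<dots> = (\<Sum>w\<in>states {1..n}. (\<Sum>b\<in>UNIV. X (s(0:=b)) (w(0:=b))) * Z w u)"
      by (simp add: sum_distrib_right) (rule sum.swap)
    also have "\<dots> = mult {1..n} (ptrace0 n X) Z s u"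
      using s u by (auto simp: mult_def ptrace0_def intro!: sum.cong)
    finally show ?thesis .
  qed
qed

lemma T3:
  assumes Z: "locL {0..n} S Z" and S: "0 \<notin> S"
  shows "ptrace0 n (mult {0..n} Z X) = mult {1..n} Z (ptrace0 n X)"
proof (intro ext)
  fix s u
  show "ptrace0 n (mult {0..n} Z X) s u = mult {1..n} Z (ptrace0 n X) s u"
  proof (cases "s \<in> states {1..n} \<and> u \<in> states {1..n}")
    case False then show ?thesis by (auto simp: ptrace0_def mult_def)
  next
    case True
    then have s: "s \<in> states {1..n}" and u: "u \<in> states {1..n}" by auto
    have "ptrace0 n (mult {0..n} Z X) s u =
      (\<Sum>b\<in>UNIV. \<Sum>w\<in>states {1..n}. \<Sum>b'\<in>UNIV. Z (s(0:=b)) (w(0:=b')) * X (w(0:=b')) (u(0:=b)))"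
      using s u by (simp add: ptrace0_def mult_def states1_upd0 sum_states_L0)
    also have "\<dots> = (\<Sum>b\<in>UNIV. \<Sum>w\<in>states {1..n}. Z s w * X (w(0:=b)) (u(0:=b)))"
    proof (intro sum.cong refl)
      fix b w assume w: "w \<in> states {1..n}"
      show "(\<Sum>b'\<in>UNIV. Z (s(0:=b)) (w(0:=b')) * X (w(0:=b')) (u(0:=b))) = Z s w * X (w(0:=b)) (u(0:=b))"
        using Z0[OF Z S s w] by (simp add: UNIV_bool)
    qed
    also have "\<dots> = (\<Sum>w\<in>states {1..n}. Z s w * (\<Sum>b\<in>UNIV. X (w(0:=b)) (u(0:=b))))"
      by (simp add: sum_distrib_left) (rule sum.swap)
    also have "\<dots> = mult {1..n} Z (ptrace0 n X) s u"
      using s u by (auto simp: mult_def ptrace0_def intro!: sum.cong)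
    finally show ?thesis .
  qed
qed

lemma res01:
  assumes A: "locL {0..n} S A" and S: "0 \<notin> S"
  shows "res {1..n} (mult {0..n} A B) = mult {1..n} A B"
proof (intro ext)
  fix s u
  show "res {1..n} (mult {0..n} A B) s u = mult {1..n} A B s u"
  proof (cases "s \<in> states {1..n} \<and> u \<in> states {1..n}")
    case False then show ?thesis by (auto simp: res_def mult_def)
  next
    case True
    have "(\<Sum>v\<in>states {0..n}. A s v * B v u) = (\<Sum>v\<in>states {1..n}. A s v * B v u)"
    proof (rule sum.mono_neutral_right)
      show "finite (states {0..n})" by (simp add: finite_states)
      show "states {1..n} \<subseteq> states {0..n}" by (auto simp: states_def)
      show "\<forall>v\<in>states {0..n} - states {1..n}. A s v * B v u = 0"
      proof
        fix v assume v: "v \<in> states {0..n} - states {1..n}"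
        have "v 0"
        proof (rule ccontr)
          assume n0: "\<not> v 0"
          have "v \<in> states {1..n}" unfolding states_def
          proof (intro CollectI allI impI)
            fix k assume "k \<notin> {1..n}"
            then have "k = 0 \<or> k \<notin> {0..n}" by auto
            then show "\<not> v k" using n0 v by (auto simp: states_def)
          qed
          then show False using v by auto
        qed
        moreover have "s 0 = False" using True states1_0 by blast
        ultimately have "A s v = 0" using locL_supp[OF A _ S, of s v] by auto
        then show "A s v * B v u = 0" by simp
      qed
    qed
    then show ?thesis using True by (simp add: res_def mult_def states1_sub)
  qed
qed

lemma res01_prodops:
  assumes "\<forall>x\<in>set xs. \<exists>S. 0 \<notin> S \<and> locL {0..n} S x"
  shows "res {1..n} (prodops {0..n} xs) = prodops {1..n} xs"
  using assms
proof (induction xs)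
  case Nil
  show ?case unfolding prodops_Nil res_def idop_def using states1_sub by (intro ext) auto
next
  case (Cons x xs)
  then obtain S where S: "0 \<notin> S" "locL {0..n} S x" by auto
  have "res {1..n} (prodops {0..n} (x # xs)) = mult {1..n} x (prodops {0..n} xs)"
    using res01[OF S(2) S(1)] by simp
  also have "\<dots> = mult {1..n} x (res {1..n} (prodops {0..n} xs))" by simp
  also have "\<dots> = prodops {1..n} (x # xs)" using Cons by simp
  finally show ?case .
qed

lemma T4:
  assumes i: "i \<in> {1..n}"
  shows "ptrace0 n (mult {0..n} (emb2 0 i M) (Pop {0..n} 0 i)) = res {1..n} (emb1 i (\<lambda>c d. \<Sum>b\<in>UNIV. M b c d b))"
proof (intro ext)
  fix s u
  have i0: "i \<noteq> 0" "i \<in> {0..n}" using i by auto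
  show "ptrace0 n (mult {0..n} (emb2 0 i M) (Pop {0..n} 0 i)) s u = res {1..n} (emb1 i (\<lambda>c d. \<Sum>b\<in>UNIV. M b c d b)) s u"
  proof (cases "s \<in> states {1..n} \<and> u \<in> states {1..n}")
    case False then show ?thesis by (auto simp: ptrace0_def res_def)
  next
    case True
    then have s: "s \<in> states {1..n}" and u: "u \<in> states {1..n}" by auto
    have e: "(\<forall>k. k \<noteq> 0 \<and> k \<noteq> i \<longrightarrow> (s(0 := b)) k = (sw 0 i (u(0 := b))) k) = (\<forall>k. k \<noteq> i \<longrightarrow> s k = u k)" for b
    proof -
      have x: "((s(0 := b)) k = (sw 0 i (u(0 := b))) k) = (s k = u k)" if "k \<noteq> 0" "k \<noteq> i" for k
        using that i0 by (simp add: sw_def)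
      show ?thesis
      proof
        assume H: "\<forall>k. k \<noteq> 0 \<and> k \<noteq> i \<longrightarrow> (s(0 := b)) k = (sw 0 i (u(0 := b))) k"
        show "\<forall>k. k \<noteq> i \<longrightarrow> s k = u k"
        proof (intro allI impI)
          fix k assume ki: "k \<noteq> i"
          show "s k = u k"
          proof (cases "k = 0")
            case True then show ?thesis using states1_0[OF s] states1_0[OF u] by simp
          next
            case False then show ?thesis using H x[of k] ki by blast
          qed
        qed
      next
        assume H: "\<forall>k. k \<noteq> i \<longrightarrow> s k = u k"
        then show "\<forall>k. k \<noteq> 0 \<and> k \<noteq> i \<longrightarrow> (s(0 := b)) k = (sw 0 i (u(0 := b))) k" using x by blast
      qed
    qed
    have v: "(s(0:=b)) 0 = b" "(s(0:=b)) i = s i" "(sw 0 i (u(0:=b))) 0 = u i" "(sw 0 i (u(0:=b))) i = b" for b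
      using i0 by (auto simp: sw_def)
    have "ptrace0 n (mult {0..n} (emb2 0 i M) (Pop {0..n} 0 i)) s u =
       (\<Sum>b\<in>UNIV. emb2 0 i M (s(0:=b)) (sw 0 i (u(0:=b))))"
      using s u i0 by (simp add: ptrace0_def PR res_def states1_upd0)
    also have "\<dots> = (\<Sum>b\<in>UNIV. if (\<forall>k. k \<noteq> i \<longrightarrow> s k = u k) then M b (s i) (u i) b else 0)"
      unfolding emb2_def e v ..
    also have "\<dots> = res {1..n} (emb1 i (\<lambda>c d. \<Sum>b\<in>UNIV. M b c d b)) s u"
      using s u by (cases "\<forall>k. k \<noteq> i \<longrightarrow> s k = u k") (simp_all add: res_def emb1_def del: not_all)
    finally show ?thesis .
  qed
qed

lemma T4':
  assumes i: "i \<in> {1..n}"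
  shows "ptrace0 n (mult {0..n} (Pop {0..n} 0 i) (emb2 i 0 M)) = res {1..n} (emb1 i (\<lambda>c d. \<Sum>b\<in>UNIV. M b c d b))"
proof (intro ext)
  fix s u
  have i0: "i \<noteq> 0" "i \<in> {0..n}" using i by auto
  show "ptrace0 n (mult {0..n} (Pop {0..n} 0 i) (emb2 i 0 M)) s u = res {1..n} (emb1 i (\<lambda>c d. \<Sum>b\<in>UNIV. M b c d b)) s u"
  proof (cases "s \<in> states {1..n} \<and> u \<in> states {1..n}")
    case False then show ?thesis by (auto simp: ptrace0_def res_def)
  next
    case True
    then have s: "s \<in> states {1..n}" and u: "u \<in> states {1..n}" by auto
    have e: "(\<forall>k. k \<noteq> i \<and> k \<noteq> 0 \<longrightarrow> (sw 0 i (s(0 := b))) k = (u(0 := b)) k) = (\<forall>k. k \<noteq> i \<longrightarrow> s k = u k)" for b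
    proof -
      have x: "((sw 0 i (s(0 := b))) k = (u(0 := b)) k) = (s k = u k)" if "k \<noteq> 0" "k \<noteq> i" for k
        using that i0 by (simp add: sw_def)
      show ?thesis
      proof
        assume H: "\<forall>k. k \<noteq> i \<and> k \<noteq> 0 \<longrightarrow> (sw 0 i (s(0 := b))) k = (u(0 := b)) k"
        show "\<forall>k. k \<noteq> i \<longrightarrow> s k = u k"
        proof (intro allI impI)
          fix k assume ki: "k \<noteq> i"
          show "s k = u k"
          proof (cases "k = 0")
            case True then show ?thesis using states1_0[OF s] states1_0[OF u] by simp
          next
            case False then show ?thesis using H x[of k] ki by blast
          qed
        qed
      next
        assume H: "\<forall>k. k \<noteq> i \<longrightarrow> s k = u k"
        then show "\<forall>k. k \<noteq> i \<and> k \<noteq> 0 \<longrightarrow> (sw 0 i (s(0 := b))) k = (u(0 := b)) k" using x by blast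
      qed
    qed
    have v: "(u(0:=b)) 0 = b" "(u(0:=b)) i = u i" "(sw 0 i (s(0:=b))) 0 = s i" "(sw 0 i (s(0:=b))) i = b" for b
      using i0 by (auto simp: sw_def)
    have "ptrace0 n (mult {0..n} (Pop {0..n} 0 i) (emb2 i 0 M)) s u =
       (\<Sum>b\<in>UNIV. emb2 i 0 M (sw 0 i (s(0:=b))) (u(0:=b)))"
      using s u i0 by (simp add: ptrace0_def PL res_def states1_upd0)
    also have "\<dots> = (\<Sum>b\<in>UNIV. if (\<forall>k. k \<noteq> i \<longrightarrow> s k = u k) then M b (s i) (u i) b else 0)"
      unfolding emb2_def e v ..
    also have "\<dots> = res {1..n} (emb1 i (\<lambda>c d. \<Sum>b\<in>UNIV. M b c d b)) s u"
      using s u by (cases "\<forall>k. k \<noteq> i \<longrightarrow> s k = u k") (simp_all add: res_def emb1_def del: not_all)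
    finally show ?thesis .
  qed
qed




lemma theta_sand: "\<kappa> \<noteq> 0 \<Longrightarrow> theta \<kappa> b b * X * theta \<kappa> p p = (if b = p then (if b then X / \<kappa> else X * \<kappa>) else X)"
proof -
  assume k: "\<kappa> \<noteq> 0"
  have sq: "csqrt \<kappa> * csqrt \<kappa> = \<kappa>" by (metis power2_csqrt power2_eq_square)
  have sq0: "csqrt \<kappa> \<noteq> 0" using k sq by auto
  show ?thesis using sq sq0 by (auto simp: theta_def field_simps)
qed

lemma loc1:
  fixes \<kappa> \<kappa>0 \<upsilon>0 \<psi>0 x :: complex
  assumes k: "\<kappa> \<noteq> 0" "\<kappa>0 \<noteq> 0" "\<upsilon>0 \<noteq> 0" "\<psi>0 \<noteq> 0"
    and d1: "1 - \<kappa>0 * \<upsilon>0 * (\<kappa>^2 * x) \<noteq> 0" "1 + \<kappa>0 * (\<kappa>^2 * x) / \<upsilon>0 \<noteq> 0"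
    and d2: "1 - \<kappa>0 * \<upsilon>0 * x \<noteq> 0" "1 + \<kappa>0 * x / \<upsilon>0 \<noteq> 0"
    and d3: "1 - \<kappa>^2 * x^2 \<noteq> 0"
    and d4: "1 - \<kappa>^2 * \<kappa>0 * \<upsilon>0 * x \<noteq> 0" "1 + \<kappa>^2 * \<kappa>0 * x / \<upsilon>0 \<noteq> 0"
  shows "(\<Sum>b\<in>UNIV. \<Sum>p\<in>UNIV. (theta \<kappa> b b * kbar \<kappa>0 \<upsilon>0 \<psi>0 (\<kappa>^2 * x) b p * theta \<kappa> p p) * rmat \<kappa> (x^2) p c d b)
       = Phi_bdy \<kappa> \<kappa>0 \<upsilon>0 x * kbar \<kappa>0 \<upsilon>0 \<psi>0 x c d"
proof -
  have e1: "\<upsilon>0 + \<kappa>0 * (\<kappa>^2 * x) \<noteq> 0" using d1(2) k(3) by (auto simp: field_simps)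
  have e2: "\<upsilon>0 + \<kappa>0 * x \<noteq> 0" using d2(2) k(3) by (auto simp: field_simps)
  have e4: "\<upsilon>0 + \<kappa>^2 * \<kappa>0 * x \<noteq> 0" using d4(2) k(3) by (auto simp: field_simps)
  have n: "\<kappa>^2 * \<kappa>0 * \<upsilon>0 * x \<noteq> 1" "\<kappa>0 * \<upsilon>0 * (\<kappa>^2 * x) \<noteq> 1"
    "\<upsilon>0 + \<kappa>^2 * \<kappa>0 * x \<noteq> 0" "\<upsilon>0 + \<kappa>0 * (\<kappa>^2 * x) \<noteq> 0"
    "\<kappa>0 * \<upsilon>0 * x \<noteq> 1" "\<upsilon>0 + \<kappa>0 * x \<noteq> 0" "\<kappa>^2 * x^2 \<noteq> 1"
    using d1 d2 d3 d4 k(3) by (auto simp: field_simps)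
  show ?thesis
    apply (cases c; cases d)
       apply (simp_all add: UNIV_bool theta_sand[OF k(1)] rmat_def kbar_def Phi_bdy_def)
       apply (simp_all add: divide_simps n k)
       apply algebra
      apply (intro disjI2; algebra)
     apply (intro disjI2; algebra)
    apply algebra
    done
qed

lemma loc2:
  fixes \<kappa> \<kappa>0 \<upsilon>0 \<psi>0 x :: complex
  assumes k: "\<kappa> \<noteq> 0" "\<kappa>0 \<noteq> 0" "\<upsilon>0 \<noteq> 0" "\<psi>0 \<noteq> 0" "x \<noteq> 0"
    and d1: "1 - \<kappa>0 * \<upsilon>0 * (\<kappa>^2 * x) \<noteq> 0" "1 + \<kappa>0 * (\<kappa>^2 * x) / \<upsilon>0 \<noteq> 0"
    and d2: "1 - \<kappa>0 * \<upsilon>0 * (1/x) \<noteq> 0" "1 + \<kappa>0 * (1/x) / \<upsilon>0 \<noteq> 0"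
    and d3: "1 - \<kappa>^2 * x^2 \<noteq> 0"
    and d4: "1 - \<kappa>^2 * \<kappa>0 * \<upsilon>0 * x \<noteq> 0" "1 + \<kappa>^2 * \<kappa>0 * x / \<upsilon>0 \<noteq> 0"
  shows "(\<Sum>r\<in>UNIV. (\<Sum>b\<in>UNIV. \<Sum>p\<in>UNIV. (theta \<kappa> b b * kbar \<kappa>0 \<upsilon>0 \<psi>0 (\<kappa>^2 * x) b p * theta \<kappa> p p) * rmat \<kappa> (x^2) p c r b)
           * kbar \<kappa>0 \<upsilon>0 \<psi>0 (1/x) r d)
       = Phi_bdy \<kappa> \<kappa>0 \<upsilon>0 x * (if c = d then 1 else 0)"
proof -
  have n: "\<kappa>^2 * \<kappa>0 * \<upsilon>0 * x \<noteq> 1" "\<kappa>0 * \<upsilon>0 * (\<kappa>^2 * x) \<noteq> 1"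
    "\<upsilon>0 + \<kappa>^2 * \<kappa>0 * x \<noteq> 0" "\<upsilon>0 + \<kappa>0 * (\<kappa>^2 * x) \<noteq> 0"
    "\<kappa>0 * \<upsilon>0 \<noteq> x" "x * \<upsilon>0 + \<kappa>0 \<noteq> 0" "\<kappa>0 + x * \<upsilon>0 \<noteq> 0" "\<kappa>0 + \<upsilon>0 * x \<noteq> 0" "\<upsilon>0 * x + \<kappa>0 \<noteq> 0" "\<kappa>^2 * x^2 \<noteq> 1"
    "x \<noteq> \<kappa>0 * \<upsilon>0"
    using d1 d2 d3 d4 k(3) k(5) by (auto simp: field_simps)
  show ?thesis
    apply (cases c; cases d)
       apply (simp_all add: UNIV_bool theta_sand[OF k(1)] rmat_def kbar_def Phi_bdy_def)
       apply (simp_all add: divide_simps n k)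
       apply algebra+
    done
qed

lemma runit:
  fixes \<kappa> \<alpha> \<beta> :: complex
  assumes ab: "\<alpha> * \<beta> = 1" and d: "1 - \<kappa>^2 * \<alpha> \<noteq> 0" "1 - \<kappa>^2 * \<beta> \<noteq> 0"
  shows "(\<Sum>r\<in>UNIV. \<Sum>r'\<in>UNIV. rmat \<kappa> \<alpha> p1 p2 r r' * rmat \<kappa> \<beta> r' r q2 q1) = (if p1 = q1 \<and> p2 = q2 then 1 else 0)"
proof -
  have a0: "\<alpha> \<noteq> 0" using ab by auto
  have b: "\<beta> = 1 / \<alpha>" using ab a0 by (simp add: eq_divide_eq mult.commute)
  have n: "\<kappa>^2 * \<alpha> \<noteq> 1" "\<kappa>^2 \<noteq> \<alpha>" "\<alpha> \<noteq> \<kappa>^2" using d b a0 by (auto simp: field_simps)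
  show ?thesis
    apply (cases p1; cases p2; cases q1; cases q2)
    apply (simp_all add: UNIV_bool rmat_def b)
    apply (simp_all add: divide_simps n a0)
    apply algebra+
    done
qed

lemma kunit:
  fixes \<kappa>n \<upsilon>n \<psi>n x :: complex
  assumes k: "\<kappa>n \<noteq> 0" "\<upsilon>n \<noteq> 0" "\<psi>n \<noteq> 0" "x \<noteq> 0"
    and d: "1 - \<kappa>n * \<upsilon>n * x \<noteq> 0" "1 + \<kappa>n * x / \<upsilon>n \<noteq> 0" "1 - \<kappa>n * \<upsilon>n * (1/x) \<noteq> 0" "1 + \<kappa>n * (1/x) / \<upsilon>n \<noteq> 0"
  shows "(\<Sum>r\<in>UNIV. kmat \<kappa>n \<upsilon>n \<psi>n x p r * kmat \<kappa>n \<upsilon>n \<psi>n (1/x) r q) = (if p = q then 1 else 0)"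
proof -
  have n: "\<kappa>n * \<upsilon>n * x \<noteq> 1" "\<upsilon>n + \<kappa>n * x \<noteq> 0" "\<kappa>n * \<upsilon>n \<noteq> x" "x \<noteq> \<kappa>n * \<upsilon>n" "x * \<upsilon>n + \<kappa>n \<noteq> 0" "\<kappa>n + x * \<upsilon>n \<noteq> 0" "\<kappa>n + \<upsilon>n * x \<noteq> 0" "\<upsilon>n * x + \<kappa>n \<noteq> 0"
    using d k by (auto simp: field_simps)
  show ?thesis
    apply (cases p; cases q)
    apply (simp_all add: UNIV_bool kmat_def)
    apply (simp_all add: divide_simps n k)
    apply algebra+
    done
qed

definition m3 :: "(bool \<Rightarrow> bool \<Rightarrow> bool \<Rightarrow> bool \<Rightarrow> bool \<Rightarrow> bool \<Rightarrow> complex) \<Rightarrow> (bool \<Rightarrow> bool \<Rightarrow> bool \<Rightarrow> bool \<Rightarrow> bool \<Rightarrow> bool \<Rightarrow> complex) \<Rightarrow> bool \<Rightarrow> bool \<Rightarrow> bool \<Rightarrow> bool \<Rightarrow> bool \<Rightarrow> bool \<Rightarrow> complex" where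
  "m3 M N = (\<lambda>p1 p2 p3 q1 q2 q3. \<Sum>r\<in>UNIV. \<Sum>r'\<in>UNIV. \<Sum>r''\<in>UNIV. M p1 p2 p3 r r' r'' * N r r' r'' q1 q2 q3)"

definition rn :: "complex \<Rightarrow> complex \<Rightarrow> bool \<Rightarrow> bool \<Rightarrow> bool \<Rightarrow> bool \<Rightarrow> complex" where
  "rn \<kappa> x a b c d =
     (if a \<and> b \<and> c \<and> d then 1 - \<kappa>^2 * x
      else if a \<and> \<not> b \<and> c \<and> \<not> d then \<kappa> * (1 - x)
      else if a \<and> \<not> b \<and> \<not> c \<and> d then 1 - \<kappa>^2
      else if \<not> a \<and> b \<and> c \<and> \<not> d then (1 - \<kappa>^2) * x
      else if \<not> a \<and> b \<and> \<not> c \<and> d then \<kappa> * (1 - x)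
      else if \<not> a \<and> \<not> b \<and> \<not> c \<and> \<not> d then 1 - \<kappa>^2 * x
      else 0)"

lemma rmat_rn: "rmat \<kappa> x = (\<lambda>a b c d. (1 / (1 - \<kappa>^2 * x)) * rn \<kappa> x a b c d)"
  by (simp add: rmat_def rn_def fun_eq_iff)

definition "R12 \<kappa> \<alpha> = (\<lambda>x y z x' y' z'. rn \<kappa> \<alpha> x y x' y' * (if z = z' then 1 else 0))"
definition "R13 \<kappa> \<alpha> = (\<lambda>x y z x' y' z'. rn \<kappa> \<alpha> x z x' z' * (if y = y' then 1 else 0))"
definition "R23 \<kappa> \<alpha> = (\<lambda>x y z x' y' z'. rn \<kappa> \<alpha> y z y' z' * (if x = x' then 1 else 0))"

lemma m3_13_23: "m3 (R13 \<kappa> \<gamma>) (R23 \<kappa> \<beta>) = (\<lambda>p1 p2 p3 q1 q2 q3. \<Sum>s\<in>UNIV. rn \<kappa> \<gamma> p1 p3 q1 s * rn \<kappa> \<beta> p2 s q2 q3)"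
  apply (intro ext)
  subgoal for p1 p2 p3 q1 q2 q3
    by (cases p2; cases q1) (simp_all add: m3_def R13_def R23_def UNIV_bool)
  done

lemma m3_12_X: "m3 (R12 \<kappa> \<alpha>) X = (\<lambda>p1 p2 p3 q1 q2 q3. \<Sum>r\<in>UNIV. \<Sum>r'\<in>UNIV. rn \<kappa> \<alpha> p1 p2 r r' * X r r' p3 q1 q2 q3)"
  apply (intro ext)
  subgoal for p1 p2 p3 q1 q2 q3
    by (cases p3) (simp_all add: m3_def R12_def UNIV_bool)
  done

lemma m3_13_12: "m3 (R13 \<kappa> \<gamma>) (R12 \<kappa> \<alpha>) = (\<lambda>p1 p2 p3 q1 q2 q3. \<Sum>r\<in>UNIV. rn \<kappa> \<gamma> p1 p3 r q3 * rn \<kappa> \<alpha> r p2 q1 q2)"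
  apply (intro ext)
  subgoal for p1 p2 p3 q1 q2 q3
    by (cases p2; cases q3) (simp_all add: m3_def R13_def R12_def UNIV_bool)
  done

lemma m3_23_X: "m3 (R23 \<kappa> \<beta>) Y = (\<lambda>p1 p2 p3 q1 q2 q3. \<Sum>r'\<in>UNIV. \<Sum>r''\<in>UNIV. rn \<kappa> \<beta> p2 p3 r' r'' * Y p1 r' r'' q1 q2 q3)"
  apply (intro ext)
  subgoal for p1 p2 p3 q1 q2 q3
    by (cases p1) (simp_all add: m3_def R23_def UNIV_bool)
  done

lemma ybe_idx:
  "(\<Sum>r\<in>UNIV. \<Sum>r'\<in>UNIV. rn \<kappa> \<alpha> p1 p2 r r' * (\<Sum>s\<in>UNIV. rn \<kappa> (\<alpha> * \<beta>) r p3 q1 s * rn \<kappa> \<beta> r' s q2 q3))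
 = (\<Sum>r'\<in>UNIV. \<Sum>r''\<in>UNIV. rn \<kappa> \<beta> p2 p3 r' r'' * (\<Sum>s\<in>UNIV. rn \<kappa> (\<alpha> * \<beta>) p1 r'' s q3 * rn \<kappa> \<alpha> s r' q1 q2))"
  apply (cases p1; cases p2; cases p3; cases q1; cases q2; cases q3)
  apply (simp_all add: UNIV_bool rn_def)
  apply (algebra)+
  done

lemma ybe_mat: "m3 (R12 \<kappa> \<alpha>) (m3 (R13 \<kappa> (\<alpha> * \<beta>)) (R23 \<kappa> \<beta>)) = m3 (R23 \<kappa> \<beta>) (m3 (R13 \<kappa> (\<alpha> * \<beta>)) (R12 \<kappa> \<alpha>))"
  unfolding m3_13_23 m3_12_X m3_13_12 m3_23_X using ybe_idx by blast

lemma smult_smult[simp]: "smult_op c (smult_op d A) = smult_op (c * d) A"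
  by (simp add: smult_op_def mult.assoc)

lemma emb2_smult: "emb2 a b (\<lambda>p q p' q'. k * R p q p' q') = smult_op k (emb2 a b R)"
  by (auto simp: emb2_def smult_op_def fun_eq_iff)

lemma emb2_rmat: "emb2 a b (rmat \<kappa> x) = smult_op (1 / (1 - \<kappa>^2 * x)) (emb2 a b (rn \<kappa> x))"
  unfolding rmat_rn by (rule emb2_smult)

lemma emb23_12: assumes "c \<noteq> a" "c \<noteq> b"
  shows "emb2 a b R = emb3 a b c (\<lambda>x y z x' y' z'. R x y x' y' * (if z = z' then 1 else 0))"
proof (intro ext)
  fix s u :: state
  have "(\<forall>k. k \<noteq> a \<and> k \<noteq> b \<longrightarrow> s k = u k) = ((\<forall>k. k \<noteq> a \<and> k \<noteq> b \<and> k \<noteq> c \<longrightarrow> s k = u k) \<and> s c = u c)"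
    using assms by metis
  then show "emb2 a b R s u = emb3 a b c (\<lambda>x y z x' y' z'. R x y x' y' * (if z = z' then 1 else 0)) s u"
    unfolding emb2_def emb3_def by (cases "s c = u c") (simp_all del: not_all)
qed

lemma emb23_13: assumes "b \<noteq> a" "b \<noteq> c"
  shows "emb2 a c R = emb3 a b c (\<lambda>x y z x' y' z'. R x z x' z' * (if y = y' then 1 else 0))"
proof (intro ext)
  fix s u :: state
  have "(\<forall>k. k \<noteq> a \<and> k \<noteq> c \<longrightarrow> s k = u k) = ((\<forall>k. k \<noteq> a \<and> k \<noteq> b \<and> k \<noteq> c \<longrightarrow> s k = u k) \<and> s b = u b)"
    using assms by metis
  then show "emb2 a c R s u = emb3 a b c (\<lambda>x y z x' y' z'. R x z x' z' * (if y = y' then 1 else 0)) s u"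
    unfolding emb2_def emb3_def by (cases "s b = u b") (simp_all del: not_all)
qed

lemma emb23_23: assumes "a \<noteq> b" "a \<noteq> c"
  shows "emb2 b c R = emb3 a b c (\<lambda>x y z x' y' z'. R y z y' z' * (if x = x' then 1 else 0))"
proof (intro ext)
  fix s u :: state
  have "(\<forall>k. k \<noteq> b \<and> k \<noteq> c \<longrightarrow> s k = u k) = ((\<forall>k. k \<noteq> a \<and> k \<noteq> b \<and> k \<noteq> c \<longrightarrow> s k = u k) \<and> s a = u a)"
    using assms by metis
  then show "emb2 b c R s u = emb3 a b c (\<lambda>x y z x' y' z'. R y z y' z' * (if x = x' then 1 else 0)) s u"
    unfolding emb2_def emb3_def by (cases "s a = u a") (simp_all del: not_all)
qed

lemma E33m: "finite L \<Longrightarrow> a \<in> L \<Longrightarrow> b \<in> L \<Longrightarrow> c \<in> L \<Longrightarrow> a \<noteq> b \<Longrightarrow> a \<noteq> c \<Longrightarrow> b \<noteq> c \<Longrightarrow>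
  mult L (emb3 a b c M) (emb3 a b c N) = res L (emb3 a b c (m3 M N))"
  unfolding m3_def by (rule E33)

lemma opYBE:
  assumes "finite L" "a \<in> L" "b \<in> L" "c \<in> L" "a \<noteq> b" "a \<noteq> c" "b \<noteq> c"
  shows "mult L (emb2 a b (rmat \<kappa> \<alpha>)) (mult L (emb2 a c (rmat \<kappa> (\<alpha>*\<beta>))) (emb2 b c (rmat \<kappa> \<beta>)))
       = mult L (emb2 b c (rmat \<kappa> \<beta>)) (mult L (emb2 a c (rmat \<kappa> (\<alpha>*\<beta>))) (emb2 a b (rmat \<kappa> \<alpha>)))"
proof -
  have e12: "emb2 a b (rn \<kappa> \<alpha>) = emb3 a b c (R12 \<kappa> \<alpha>)"
    using assms by (simp add: emb23_12 R12_def)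
  have e13: "emb2 a c (rn \<kappa> (\<alpha>*\<beta>)) = emb3 a b c (R13 \<kappa> (\<alpha>*\<beta>))"
    using assms by (simp add: emb23_13 R13_def)
  have e23: "emb2 b c (rn \<kappa> \<beta>) = emb3 a b c (R23 \<kappa> \<beta>)"
    using assms by (simp add: emb23_23 R23_def)
  have E: "mult L (emb3 a b c M) (emb3 a b c N) = res L (emb3 a b c (m3 M N))" for M N
    using assms by (intro E33m)
  show ?thesis
    unfolding emb2_rmat smult_mult_left smult_mult_right e12 e13 e23 E mult_res_right
    by (simp add: ybe_mat mult.commute mult.left_commute)
qed

lemma opUnit:
  assumes "finite L" "a \<in> L" "b \<in> L" "a \<noteq> b" "\<alpha> * \<beta> = 1" "1 - \<kappa>^2 * \<alpha> \<noteq> 0" "1 - \<kappa>^2 * \<beta> \<noteq> 0"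
  shows "mult L (emb2 a b (rmat \<kappa> \<alpha>)) (emb2 b a (rmat \<kappa> \<beta>)) = idop L"
proof -
  have "mult L (emb2 a b (rmat \<kappa> \<alpha>)) (emb2 b a (rmat \<kappa> \<beta>)) =
     res L (emb2 a b (\<lambda>p1 p2 q1 q2. \<Sum>r\<in>UNIV. \<Sum>r'\<in>UNIV. rmat \<kappa> \<alpha> p1 p2 r r' * rmat \<kappa> \<beta> r' r q2 q1))"
  proof -
    have fl: "emb2 b a (rmat \<kappa> \<beta>) = emb2 a b (\<lambda>p q p' q'. rmat \<kappa> \<beta> q p q' p')"
      using assms(4) by (intro emb2_flip) auto
    show ?thesis unfolding fl using assms(1-4) by (simp add: E22)
  qed
  also have "\<dots> = res L (emb2 a b (\<lambda>p q p' q'. if p = p' \<and> q = q' then 1 else 0))"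
    using runit[OF assms(5-7)] by simp
  also have "\<dots> = idop L" using assms(4) by (rule emb2_id)
  finally show ?thesis .
qed

lemma opKunit:
  assumes "finite L" "a \<in> L" "\<kappa>n \<noteq> 0" "\<upsilon>n \<noteq> 0" "\<psi>n \<noteq> 0" "x \<noteq> 0"
    "1 - \<kappa>n * \<upsilon>n * x \<noteq> 0" "1 + \<kappa>n * x / \<upsilon>n \<noteq> 0" "1 - \<kappa>n * \<upsilon>n * (1/x) \<noteq> 0" "1 + \<kappa>n * (1/x) / \<upsilon>n \<noteq> 0"
  shows "mult L (emb1 a (kmat \<kappa>n \<upsilon>n \<psi>n x)) (emb1 a (kmat \<kappa>n \<upsilon>n \<psi>n (1/x))) = idop L"
  using assms by (simp add: E1 kunit emb1_id)

lemma ctx2: "finite L \<Longrightarrow> mult L A B = mult L C D \<Longrightarrow> mult L A (mult L B X) = mult L C (mult L D X)"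
  by (metis mult_assoc)

lemma ctx3: "finite L \<Longrightarrow> mult L A (mult L B C) = mult L D (mult L E F) \<Longrightarrow>
    mult L A (mult L B (mult L C X)) = mult L D (mult L E (mult L F X))"
  by (metis mult_assoc)

lemma prodops_snoc: "finite L \<Longrightarrow> prodops L (xs @ [y]) = mult L (prodops L xs) y"
  by (simp add: prodops_append)

lemma tele:
  assumes fin: "finite L" and h: "\<forall>j\<in>set js. mult L (f j) (g j) = idop L"
  shows "mult L (prodops L (map f js)) (prodops L (map g (rev js))) = idop L"
  using h
proof (induction js)
  case Nil then show ?case using fin by simp
next
  case (Cons j js)
  have "mult L (prodops L (map f (j # js))) (prodops L (map g (rev (j # js))))
      = mult L (f j) (mult L (mult L (prodops L (map f js)) (prodops L (map g (rev js)))) (g j))"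
    using fin by (simp add: prodops_snoc mult_assoc)
  also have "\<dots> = mult L (f j) (g j)" using Cons fin by simp
  also have "\<dots> = idop L" using Cons by simp
  finally show ?case .
qed

lemma ybe_chain:
  assumes fin: "finite L"
    and loc: "\<forall>j\<in>set js. locL L {a,j} (F j) \<and> locL L {j,c} (H j)"
    and dis: "distinct js" "a \<notin> set js" "c \<notin> set js" "a \<noteq> c"
    and ybe: "\<forall>j\<in>set js. mult L (F j) (mult L G (H j)) = mult L (H j) (mult L G (F j))"
  shows "mult L (prodops L (map F js)) (mult L G (prodops L (map H (rev js))))
       = mult L (prodops L (map H (rev js))) (mult L G (prodops L (map F js)))"
  using loc dis ybe
proof (induction js)
  case Nil then show ?case using fin by simp
next
  case (Cons j js)
  define PF where "PF = prodops L (map F js)"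
  define PH where "PH = prodops L (map H (rev js))"
  have IH: "mult L PF (mult L G PH) = mult L PH (mult L G PF)"
    unfolding PF_def PH_def using Cons by simp
  have locPF: "locL L (insert a (set js)) PF"
    unfolding PF_def using Cons.prems(1) fin
    by (intro loc_prodops) (auto intro: loc_mono)
  have locPH: "locL L (insert c (set js)) PH"
    unfolding PH_def using Cons.prems(1) fin
    by (intro loc_prodops) (auto intro: loc_mono)
  have Fj: "locL L {a,j} (F j)" and Hj: "locL L {j,c} (H j)" using Cons.prems(1) by auto
  have c1: "mult L PF (H j) = mult L (H j) PF"
    by (rule loc_commute[OF fin locPF Hj]) (use Cons.prems in auto)
  have c2: "mult L (F j) PH = mult L PH (F j)"
    by (rule loc_commute[OF fin Fj locPH]) (use Cons.prems in auto)
  have y: "mult L (F j) (mult L G (H j)) = mult L (H j) (mult L G (F j))" using Cons.prems by auto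
  have "mult L (prodops L (map F (j # js))) (mult L G (prodops L (map H (rev (j # js)))))
      = mult L (F j) (mult L PF (mult L G (mult L PH (H j))))"
    using fin by (simp add: prodops_snoc mult_assoc PF_def PH_def)
  also have "\<dots> = mult L (F j) (mult L PH (mult L G (mult L PF (H j))))"
    using ctx3[OF fin IH] by simp
  also have "\<dots> = mult L (F j) (mult L PH (mult L G (mult L (H j) PF)))"
    by (simp add: c1)
  also have "\<dots> = mult L PH (mult L (F j) (mult L G (mult L (H j) PF)))"
    using ctx2[OF fin c2] by simp
  also have "\<dots> = mult L PH (mult L (H j) (mult L G (mult L (F j) PF)))"
    using ctx3[OF fin y] by simp
  also have "\<dots> = mult L (prodops L (map H (rev (j # js)))) (mult L G (prodops L (map F (j # js))))"
    using fin by (simp add: prodops_snoc mult_assoc PF_def PH_def)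
  finally show ?case .
qed

lemma cnj_cnj[simp]: "cnj a b (cnj a b A) = A"
  by (simp add: cnj_def)

lemma P_comm':
  assumes "finite L" "a \<in> L" "b \<in> L"
  shows "mult L A (Pop L a b) = mult L (Pop L a b) (cnj a b A)"
  using P_comm[OF assms, of "cnj a b A"] by simp




definition LS1 :: "complex \<Rightarrow> (nat \<Rightarrow> complex) \<Rightarrow> (nat \<Rightarrow> complex) \<Rightarrow> (bool \<Rightarrow> bool \<Rightarrow> complex) \<Rightarrow> nat \<Rightarrow> op list" where
  "LS1 \<kappa> a b K m = map (\<lambda>j. emb2 j (j+1) (rcheck \<kappa> (a j))) (rev [1..<m]) @ [emb1 1 K] @ map (\<lambda>j. emb2 j (j+1) (rcheck \<kappa> (b j))) [1..<m]"
definition RS1 :: "complex \<Rightarrow> (nat \<Rightarrow> complex) \<Rightarrow> (nat \<Rightarrow> complex) \<Rightarrow> (bool \<Rightarrow> bool \<Rightarrow> complex) \<Rightarrow> nat \<Rightarrow> op list" where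
  "RS1 \<kappa> a b K m = map (\<lambda>j. emb2 j m (rmat \<kappa> (a j))) (rev [1..<m]) @ [emb1 m K] @ map (\<lambda>j. emb2 m j (rmat \<kappa> (b j))) [1..<m]"

lemma LS1_Suc: "1 \<le> m \<Longrightarrow> LS1 \<kappa> a b K (Suc m) = emb2 m (Suc m) (rcheck \<kappa> (a m)) # LS1 \<kappa> a b K m @ [emb2 m (Suc m) (rcheck \<kappa> (b m))]"
  by (simp add: LS1_def)

lemma tr_simps: "tr a b a = b" "tr a b b = a" "k \<noteq> a \<Longrightarrow> k \<noteq> b \<Longrightarrow> tr a b k = k"
  by (auto simp: tr_def)

lemma RS1_Suc: "1 \<le> m \<Longrightarrow> RS1 \<kappa> a b K (Suc m) = emb2 m (Suc m) (rmat \<kappa> (a m)) # map (cnj m (Suc m)) (RS1 \<kappa> a b K m) @ [emb2 (Suc m) m (rmat \<kappa> (b m))]"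
  by (simp add: RS1_def cnj_emb1 cnj_emb2 tr_simps)

lemma S1:
  assumes "1 \<le> m" "finite L" "\<forall>j. 1 \<le> j \<and> j \<le> m \<longrightarrow> j \<in> L"
  shows "prodops L (LS1 \<kappa> a b K m) = prodops L (RS1 \<kappa> a b K m)"
  using assms
proof (induction m)
  case 0 then show ?case by simp
next
  case (Suc m)
  show ?case
  proof (cases "m = 0")
    case True then show ?thesis by (simp add: LS1_def RS1_def)
  next
    case False
    then have m1: "1 \<le> m" using Suc by auto
    let ?L = "L"
    have fin: "finite ?L" using Suc by simp
    have inL: "m \<in> ?L" "Suc m \<in> ?L" using m1 Suc.prems by auto
    have IH: "prodops ?L (LS1 \<kappa> a b K m) = prodops ?L (RS1 \<kappa> a b K m)" using Suc.IH m1 Suc.prems by simp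
    define Y where "Y = prodops ?L (RS1 \<kappa> a b K m)"
    define ra where "ra = emb2 m (Suc m) (rmat \<kappa> (a m))"
    define rb where "rb = emb2 m (Suc m) (rmat \<kappa> (b m))"
    define P where "P = Pop ?L m (Suc m)"
    have xa: "res ?L (emb2 m (Suc m) (rcheck \<kappa> (a m))) = mult ?L ra P"
      unfolding ra_def P_def by (rule rcheck_P) (use inL fin in auto)
    have xb: "res ?L (emb2 m (Suc m) (rcheck \<kappa> (b m))) = mult ?L rb P"
      unfolding rb_def P_def by (rule rcheck_P) (use inL fin in auto)
    have "prodops ?L (LS1 \<kappa> a b K (Suc m)) =
        mult ?L (emb2 m (Suc m) (rcheck \<kappa> (a m))) (mult ?L Y (emb2 m (Suc m) (rcheck \<kappa> (b m))))"
      using m1 fin by (simp add: LS1_Suc prodops_snoc IH Y_def)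
    also have "\<dots> = mult ?L (mult ?L ra P) (mult ?L Y (mult ?L rb P))"
      by (metis xa xb mult_res_left mult_res_right)
    also have "\<dots> = mult ?L ra (mult ?L P (mult ?L (mult ?L Y rb) P))"
        by (simp only: mult_assoc[OF fin])
    also have "\<dots> = mult ?L ra (cnj m (Suc m) (mult ?L Y rb))"
      unfolding P_def using inL fin by (simp add: PXP cnj_res[symmetric])
    also have "\<dots> = mult ?L ra (mult ?L (prodops ?L (map (cnj m (Suc m)) (RS1 \<kappa> a b K m))) (emb2 (Suc m) m (rmat \<kappa> (b m))))"
      using inL fin by (simp add: cnj_mult cnj_prodops Y_def rb_def cnj_emb2 tr_simps)
    also have "\<dots> = prodops ?L (RS1 \<kappa> a b K (Suc m))"
      using m1 fin by (simp add: RS1_Suc prodops_snoc ra_def)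
    finally show ?thesis .
  qed
qed

definition LS2 :: "complex \<Rightarrow> (nat \<Rightarrow> complex) \<Rightarrow> (nat \<Rightarrow> complex) \<Rightarrow> (bool \<Rightarrow> bool \<Rightarrow> complex) \<Rightarrow> nat \<Rightarrow> nat \<Rightarrow> op list" where
  "LS2 \<kappa> c d K n m = map (\<lambda>j. emb2 (j-1) j (rcheck \<kappa> (c j))) [m+1..<n+1] @ [emb1 n K] @ map (\<lambda>j. emb2 (j-1) j (rcheck \<kappa> (d j))) (rev [m+1..<n+1])"
definition RS2 :: "complex \<Rightarrow> (nat \<Rightarrow> complex) \<Rightarrow> (nat \<Rightarrow> complex) \<Rightarrow> (bool \<Rightarrow> bool \<Rightarrow> complex) \<Rightarrow> nat \<Rightarrow> nat \<Rightarrow> op list" where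
  "RS2 \<kappa> c d K n m = map (\<lambda>j. emb2 m j (rmat \<kappa> (c j))) [m+1..<n+1] @ [emb1 m K] @ map (\<lambda>j. emb2 j m (rmat \<kappa> (d j))) (rev [m+1..<n+1])"

lemma LS2_step: "m < n \<Longrightarrow> LS2 \<kappa> c d K n m = emb2 m (Suc m) (rcheck \<kappa> (c (Suc m))) # LS2 \<kappa> c d K n (Suc m) @ [emb2 m (Suc m) (rcheck \<kappa> (d (Suc m)))]"
  by (simp add: LS2_def upt_conv_Cons del: upt_Suc)

lemma RS2_step: "m < n \<Longrightarrow> RS2 \<kappa> c d K n m = emb2 m (Suc m) (rmat \<kappa> (c (Suc m))) # map (cnj m (Suc m)) (RS2 \<kappa> c d K n (Suc m)) @ [emb2 (Suc m) m (rmat \<kappa> (d (Suc m)))]"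
  by (simp add: RS2_def upt_conv_Cons cnj_emb1 cnj_emb2 tr_simps del: upt_Suc)

lemma S2:
  assumes "m \<le> n" "finite L" "\<forall>j. m \<le> j \<and> j \<le> n \<longrightarrow> j \<in> L"
  shows "prodops L (LS2 \<kappa> c d K n m) = prodops L (RS2 \<kappa> c d K n m)"
  using assms
proof (induction "n - m" arbitrary: m)
  case 0
  then have "m = n" by simp
  then show ?case by (simp add: LS2_def RS2_def)
next
  case (Suc k)
  then have mn: "m < n" by simp
  let ?L = "L"
  have fin: "finite ?L" using Suc by simp
  have inL: "m \<in> ?L" "Suc m \<in> ?L" using mn Suc.prems by auto
  have IH: "prodops ?L (LS2 \<kappa> c d K n (Suc m)) = prodops ?L (RS2 \<kappa> c d K n (Suc m))"
    using Suc.hyps(1)[of "Suc m"] Suc.hyps(2) Suc.prems mn by simp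
  define Y where "Y = prodops ?L (RS2 \<kappa> c d K n (Suc m))"
  define ra where "ra = emb2 m (Suc m) (rmat \<kappa> (c (Suc m)))"
  define rb where "rb = emb2 m (Suc m) (rmat \<kappa> (d (Suc m)))"
  define P where "P = Pop ?L m (Suc m)"
  have xa: "res ?L (emb2 m (Suc m) (rcheck \<kappa> (c (Suc m)))) = mult ?L ra P"
    unfolding ra_def P_def by (rule rcheck_P) (use inL fin in auto)
  have xb: "res ?L (emb2 m (Suc m) (rcheck \<kappa> (d (Suc m)))) = mult ?L rb P"
    unfolding rb_def P_def by (rule rcheck_P) (use inL fin in auto)
  have "prodops ?L (LS2 \<kappa> c d K n m) =
      mult ?L (emb2 m (Suc m) (rcheck \<kappa> (c (Suc m)))) (mult ?L Y (emb2 m (Suc m) (rcheck \<kappa> (d (Suc m)))))"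
    using mn fin by (simp add: LS2_step prodops_snoc IH Y_def)
  also have "\<dots> = mult ?L (mult ?L ra P) (mult ?L Y (mult ?L rb P))"
    by (metis xa xb mult_res_left mult_res_right)
  also have "\<dots> = mult ?L ra (mult ?L P (mult ?L (mult ?L Y rb) P))"
    by (simp only: mult_assoc[OF fin])
  also have "\<dots> = mult ?L ra (cnj m (Suc m) (mult ?L Y rb))"
    unfolding P_def using inL fin by (simp add: PXP cnj_res[symmetric])
  also have "\<dots> = mult ?L ra (mult ?L (prodops ?L (map (cnj m (Suc m)) (RS2 \<kappa> c d K n (Suc m)))) (emb2 (Suc m) m (rmat \<kappa> (d (Suc m)))))"
    using inL fin by (simp add: cnj_mult cnj_prodops Y_def rb_def cnj_emb2 tr_simps)
  also have "\<dots> = prodops ?L (RS2 \<kappa> c d K n m)"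
    using mn fin by (simp add: RS2_step prodops_snoc ra_def)
  finally show ?case .
qed




lemma upt_split3: "1 \<le> i \<Longrightarrow> i \<le> n \<Longrightarrow> [1..<n+1] = [1..<i] @ [i] @ [Suc i..<n+1]"
proof -
  assume "1 \<le> i" "i \<le> n"
  then have "[1..<n+1] = [1..<i] @ [i..<n+1]" using upt_add_eq_append[of 1 i "n+1-i"] by simp
  also have "[i..<n+1] = i # [Suc i..<n+1]" using \<open>i \<le> n\<close> by (simp add: upt_conv_Cons)
  finally show ?thesis by simp
qed

lemma loc_pe2:
  assumes "finite L" "\<And>j. j \<in> set js \<Longrightarrow> p j \<in> S \<and> q j \<in> S"
  shows "locL L S (prodops L (map (\<lambda>j. emb2 (p j) (q j) (M j)) js))"
  using assms by (intro loc_prodops) (auto intro: loc_emb2)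

lemma res01_pe2:
  assumes "\<And>j. j \<in> set js \<Longrightarrow> p j \<noteq> 0 \<and> q j \<noteq> 0"
  shows "res {1..n} (prodops {0..n} (map (\<lambda>j. emb2 (p j) (q j) (M j)) js)) = prodops {1..n} (map (\<lambda>j. emb2 (p j) (q j) (M j)) js)"
proof (rule res01_prodops)
  show "\<forall>x\<in>set (map (\<lambda>j. emb2 (p j) (q j) (M j)) js). \<exists>S. 0 \<notin> S \<and> locL {0..n} S x"
  proof
    fix x assume "x \<in> set (map (\<lambda>j. emb2 (p j) (q j) (M j)) js)"
    then obtain j where j: "j \<in> set js" "x = emb2 (p j) (q j) (M j)" by auto
    have "locL {0..n} {p j, q j} x" unfolding j(2) by (rule loc_emb2) auto
    moreover have "0 \<notin> {p j, q j}" using assms[OF j(1)] by auto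
    ultimately have "0 \<notin> {p j, q j} \<and> locL {0..n} {p j, q j} x" by blast
    then show "\<exists>S. 0 \<notin> S \<and> locL {0..n} S x" by (rule exI[where x="{p j, q j}"])
  qed
qed

definition mapE :: "(nat \<Rightarrow> nat) \<Rightarrow> (nat \<Rightarrow> nat) \<Rightarrow> complex \<Rightarrow> (nat \<Rightarrow> complex) \<Rightarrow> nat list \<Rightarrow> op list" where
  "mapE p q \<kappa> g js = map (\<lambda>j. emb2 (p j) (q j) (rmat \<kappa> (g j))) js"

lemma transfer_split:
  assumes "1 \<le> i" "i \<le> n"
  shows "transfer n \<kappa> \<kappa>0 \<upsilon>0 \<psi>0 \<kappa>n \<upsilon>n \<psi>n t x = ptrace0 n
    (mult {0..n} (prodops {0..n} [emb1 0 (theta \<kappa>), emb1 0 (kbar \<kappa>0 \<upsilon>0 \<psi>0 (\<kappa>^2 * x)), emb1 0 (theta \<kappa>)])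
    (mult {0..n} (prodops {0..n} (mapE (\<lambda>_. 0) id \<kappa> (\<lambda>j. x / t j) [1..<i]))
    (mult {0..n} (emb2 0 i (rmat \<kappa> (x / t i)))
    (mult {0..n} (prodops {0..n} (mapE (\<lambda>_. 0) id \<kappa> (\<lambda>j. x / t j) [Suc i..<n+1] @ [emb1 0 (kmat \<kappa>n \<upsilon>n \<psi>n x)] @ mapE id (\<lambda>_. 0) \<kappa> (\<lambda>j. x * t j) (rev [Suc i..<n+1])))
    (mult {0..n} (emb2 i 0 (rmat \<kappa> (x * t i)))
       (prodops {0..n} (mapE id (\<lambda>_. 0) \<kappa> (\<lambda>j. x * t j) (rev [1..<i]))))))))"
proof -
  have fin: "finite {0..n}" by simp
  have U: "Ulist n \<kappa> \<kappa>n \<upsilon>n \<psi>n t x = mapE (\<lambda>_. 0) id \<kappa> (\<lambda>j. x / t j) [1..<i] @ [emb2 0 i (rmat \<kappa> (x / t i))] @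
      (mapE (\<lambda>_. 0) id \<kappa> (\<lambda>j. x / t j) [Suc i..<n+1] @ [emb1 0 (kmat \<kappa>n \<upsilon>n \<psi>n x)] @ mapE id (\<lambda>_. 0) \<kappa> (\<lambda>j. x * t j) (rev [Suc i..<n+1]))
      @ [emb2 i 0 (rmat \<kappa> (x * t i))] @ mapE id (\<lambda>_. 0) \<kappa> (\<lambda>j. x * t j) (rev [1..<i])"
    unfolding Ulist_def mapE_def using upt_split3[OF assms] by simp
  show ?thesis
    unfolding transfer_def U
    by (simp only: prodops_append[OF fin] append_Cons append_Nil prodops_Cons prodops_Nil mult_idop_right[OF fin] mult_res_right mult_assoc[OF fin])
qed

lemma cnj_mapE:
  assumes "\<And>j. j \<in> set js \<Longrightarrow> tr a b (p j) = p' j \<and> tr a b (q j) = q' j"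
  shows "map (cnj a b) (mapE p q \<kappa> g js) = mapE p' q' \<kappa> g js"
  unfolding mapE_def using assms by (auto simp: cnj_emb2)

lemma tr0i: "1 \<le> j \<Longrightarrow> j \<noteq> i \<Longrightarrow> tr 0 i j = j" "tr 0 i 0 = i" "tr 0 i i = 0"
  by (auto simp: tr_def)

lemma locW:
  assumes "i \<le> n"
  shows "locL {0..n} (insert 0 {Suc i..n}) (prodops {0..n} (mapE (\<lambda>_. 0) id \<kappa> g [Suc i..<n+1] @ [emb1 0 K] @ mapE id (\<lambda>_. 0) \<kappa> g' (rev [Suc i..<n+1])))"
  by (intro loc_prodops) (auto simp: mapE_def intro: loc_emb1 loc_emb2)

lemma locZ:
  assumes "i \<le> n"
  shows "locL {0..n} {i..n} (prodops {0..n} (mapE (\<lambda>_. i) id \<kappa> g [Suc i..<n+1] @ [emb1 i K] @ mapE id (\<lambda>_. i) \<kappa> g' (rev [Suc i..<n+1])))"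
  using assms by (intro loc_prodops) (auto simp: mapE_def intro: loc_emb1 loc_emb2)

lemma cnjW:
  assumes "1 \<le> i" "i \<le> n"
  shows "cnj 0 i (prodops {0..n} (mapE (\<lambda>_. 0) id \<kappa> g [Suc i..<n+1] @ [emb1 0 K] @ mapE id (\<lambda>_. 0) \<kappa> g' (rev [Suc i..<n+1])))
    = prodops {0..n} (mapE (\<lambda>_. i) id \<kappa> g [Suc i..<n+1] @ [emb1 i K] @ mapE id (\<lambda>_. i) \<kappa> g' (rev [Suc i..<n+1]))"
proof -
  have a: "map (cnj 0 i) (mapE (\<lambda>_. 0) id \<kappa> g [Suc i..<n+1]) = mapE (\<lambda>_. i) id \<kappa> g [Suc i..<n+1]"
    by (rule cnj_mapE) (auto simp: tr_def)
  have b: "map (cnj 0 i) (mapE id (\<lambda>_. 0) \<kappa> g' (rev [Suc i..<n+1])) = mapE id (\<lambda>_. i) \<kappa> g' (rev [Suc i..<n+1])"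
    by (rule cnj_mapE) (auto simp: tr_def)
  have m: "0 \<in> {0..n}" "i \<in> {0..n}" using assms by auto
  have fin: "finite {0..n}" by simp
  show ?thesis unfolding cnj_prodops[OF fin m] map_append a b list.map cnj_emb1 tr0i(2) by simp
qed

lemma cnjRl:
  assumes "1 \<le> i" "i \<le> n" "\<And>j. j \<in> set js \<Longrightarrow> tr 0 i (p j) = p' j \<and> tr 0 i (q j) = q' j"
  shows "cnj 0 i (prodops {0..n} (mapE p q \<kappa> g js)) = prodops {0..n} (mapE p' q' \<kappa> g js)"
  using assms by (simp add: cnj_prodops cnj_mapE)

lemma theta_collapse:
  "(\<lambda>p q. \<Sum>r\<in>UNIV. theta \<kappa> p r * (\<Sum>r'\<in>UNIV. K r r' * theta \<kappa> r' q)) = (\<lambda>p q. theta \<kappa> p p * K p q * theta \<kappa> q q)"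
  apply (intro ext)
  subgoal for p q by (cases p; cases q) (simp_all add: UNIV_bool theta_def)
  done

lemma prodops3:
  assumes "finite L" "a \<in> L"
  shows "prodops L [emb1 a X, emb1 a Y, emb1 a Z] = res L (emb1 a (\<lambda>p q. \<Sum>r\<in>UNIV. X p r * (\<Sum>r'\<in>UNIV. Y r r' * Z r' q)))"
  using assms by (simp add: E1)

lemma emb1_smult: "emb1 a (\<lambda>p q. c * K p q) = smult_op c (emb1 a K)"
  by (auto simp: emb1_def smult_op_def fun_eq_iff)

lemma transport_split:
  "transport n \<kappa> \<kappa>0 \<upsilon>0 \<psi>0 \<kappa>n \<upsilon>n \<psi>n 1 1 t i = prodops {1..n}
     (LS1 \<kappa> (\<lambda>j. t j / t i) (\<lambda>j. 1 / (t j * t i)) (kbar \<kappa>0 \<upsilon>0 \<psi>0 (1 / t i)) i @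
      LS2 \<kappa> (\<lambda>j. 1 / (t i * t j)) (\<lambda>j. 1 * t j / t i) (kmat \<kappa>n \<upsilon>n \<psi>n (1 / t i)) n i)"
  unfolding transport_def LS1_def LS2_def by simp




lemma part1:
  fixes x :: complex
  assumes i: "1 \<le> i" "i \<le> n" and tnz: "\<forall>j\<in>{1..n}. t j \<noteq> 0" and x: "x = 1 / t i"
    and k: "\<kappa> \<noteq> 0" "\<kappa>0 \<noteq> 0" "\<upsilon>0 \<noteq> 0" "\<psi>0 \<noteq> 0" and k2: "\<kappa>^2 \<noteq> 1"
    and d1: "1 - \<kappa>0 * \<upsilon>0 * (\<kappa>^2 * x) \<noteq> 0" "1 + \<kappa>0 * (\<kappa>^2 * x) / \<upsilon>0 \<noteq> 0"
    and d2: "1 - \<kappa>0 * \<upsilon>0 * x \<noteq> 0" "1 + \<kappa>0 * x / \<upsilon>0 \<noteq> 0"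
    and d3: "1 - \<kappa>^2 * x^2 \<noteq> 0"
    and d4: "1 - \<kappa>^2 * \<kappa>0 * \<upsilon>0 * x \<noteq> 0" "1 + \<kappa>^2 * \<kappa>0 * x / \<upsilon>0 \<noteq> 0"
  shows "transfer n \<kappa> \<kappa>0 \<upsilon>0 \<psi>0 \<kappa>n \<upsilon>n \<psi>n t x = smult_op (Phi_bdy \<kappa> \<kappa>0 \<upsilon>0 x) (transport n \<kappa> \<kappa>0 \<upsilon>0 \<psi>0 \<kappa>n \<upsilon>n \<psi>n 1 1 t i)"
proof -
  have fin: "finite {0..n}" by simp
  have fin1: "finite {1..n}" by simp
  have ti: "t i \<noteq> 0" using tnz i by auto
  have iL: "i \<in> {0..n}" "0 \<in> {0..n}" "i \<noteq> 0" "i \<in> {1..n}" using i by auto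
  define A where "A = prodops {0..n} [emb1 0 (theta \<kappa>), emb1 0 (kbar \<kappa>0 \<upsilon>0 \<psi>0 (\<kappa>^2 * x)), emb1 0 (theta \<kappa>)]"
  define Rl where "Rl = prodops {0..n} (mapE (\<lambda>_. 0) id \<kappa> (\<lambda>j. x / t j) [1..<i])"
  define ri where "ri = emb2 0 i (rmat \<kappa> (x / t i))"
  define W where "W = prodops {0..n} (mapE (\<lambda>_. 0) id \<kappa> (\<lambda>j. x / t j) [Suc i..<n+1] @ [emb1 0 (kmat \<kappa>n \<upsilon>n \<psi>n x)] @ mapE id (\<lambda>_. 0) \<kappa> (\<lambda>j. x * t j) (rev [Suc i..<n+1]))"
  define Rlp where "Rlp = prodops {0..n} (mapE id (\<lambda>_. 0) \<kappa> (\<lambda>j. x * t j) (rev [1..<i]))"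
  define RlpI where "RlpI = prodops {0..n} (mapE id (\<lambda>_. i) \<kappa> (\<lambda>j. x * t j) (rev [1..<i]))"
  define RlI where "RlI = prodops {0..n} (mapE (\<lambda>_. i) id \<kappa> (\<lambda>j. x / t j) [1..<i])"
  define Z where "Z = prodops {0..n} (mapE (\<lambda>_. i) id \<kappa> (\<lambda>j. x / t j) [Suc i..<n+1] @ [emb1 i (kmat \<kappa>n \<upsilon>n \<psi>n x)] @ mapE id (\<lambda>_. i) \<kappa> (\<lambda>j. x * t j) (rev [Suc i..<n+1]))"
  define P where "P = Pop {0..n} 0 i"
  let ?m = "mult {0..n}"
  let ?m1 = "mult {1..n}"
  have split: "transfer n \<kappa> \<kappa>0 \<upsilon>0 \<psi>0 \<kappa>n \<upsilon>n \<psi>n t x = ptrace0 n (?m A (?m Rl (?m ri (?m W (?m (emb2 i 0 (rmat \<kappa> (x * t i))) Rlp)))))"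
    unfolding A_def Rl_def ri_def W_def Rlp_def using transfer_split[OF i] by simp
  have ri': "?m (emb2 i 0 (rmat \<kappa> (x * t i))) Y = ?m P Y" for Y
  proof -
    have "x * t i = 1" using x ti by simp
    then have "res {0..n} (emb2 i 0 (rmat \<kappa> (x * t i))) = Pop {0..n} i 0" using rmat1[OF k2] iL by simp
    then show ?thesis unfolding P_def by (metis mult_res_left Pop_comm)
  qed
  have locRlpI: "locL {0..n} {1..i} RlpI" unfolding RlpI_def mapE_def by (rule loc_pe2) auto
  have locRlI: "locL {0..n} {1..i} RlI" unfolding RlI_def mapE_def by (rule loc_pe2) auto
  have locW: "locL {0..n} (insert 0 {Suc i..n}) W" unfolding W_def using i(2) by (rule locW)
  have locZ: "locL {0..n} {i..n} Z" unfolding Z_def using i(2) by (rule locZ)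
  have locA: "locL {0..n} {0} A" unfolding A_def by (intro loc_prodops) (auto intro: loc_emb1)
  have cR1: "cnj 0 i Rlp = RlpI" unfolding Rlp_def RlpI_def by (rule cnjRl[OF i]) (auto simp: tr_def)
  have c1: "?m P Rlp = ?m RlpI P"
    using P_comm[OF fin iL(2) iL(1), of Rlp] cR1 by (simp add: P_def)
  have c2: "?m W RlpI = ?m RlpI W"
    by (rule loc_commute[OF fin locW locRlpI]) auto
  have c3: "?m W P = ?m P Z"
    unfolding P_def W_def Z_def using P_comm'[OF fin iL(2) iL(1)] cnjW[OF i] by simp
  have ybe: "?m Rl (?m ri RlpI) = ?m RlpI (?m ri Rl)"
  proof -
    have "?m (prodops {0..n} (map (\<lambda>j. emb2 0 j (rmat \<kappa> (x / t j))) [1..<i])) (?m ri (prodops {0..n} (map (\<lambda>j. emb2 j i (rmat \<kappa> (x * t j))) (rev [1..<i]))))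
      = ?m (prodops {0..n} (map (\<lambda>j. emb2 j i (rmat \<kappa> (x * t j))) (rev [1..<i]))) (?m ri (prodops {0..n} (map (\<lambda>j. emb2 0 j (rmat \<kappa> (x / t j))) [1..<i])))"
    proof (rule ybe_chain[OF fin])
      show "\<forall>j\<in>set [1..<i]. locL {0..n} {0, j} (emb2 0 j (rmat \<kappa> (x / t j))) \<and> locL {0..n} {j, i} (emb2 j i (rmat \<kappa> (x * t j)))"
        by (auto intro: loc_emb2)
      show "distinct [1..<i]" "0 \<notin> set [1..<i]" "i \<notin> set [1..<i]" "0 \<noteq> i" using iL by auto
      show "\<forall>j\<in>set [1..<i]. ?m (emb2 0 j (rmat \<kappa> (x / t j))) (?m ri (emb2 j i (rmat \<kappa> (x * t j))))
          = ?m (emb2 j i (rmat \<kappa> (x * t j))) (?m ri (emb2 0 j (rmat \<kappa> (x / t j))))"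
      proof
        fix j assume j: "j \<in> set [1..<i]"
        then have tj: "t j \<noteq> 0" using tnz i by auto
        have e: "x / t j * (x * t j) = x / t i" using tj ti x by (simp add: field_simps power2_eq_square)
        have jL: "j \<in> {0..n}" "j \<noteq> 0" "j \<noteq> i" using j i by auto
        show "?m (emb2 0 j (rmat \<kappa> (x / t j))) (?m ri (emb2 j i (rmat \<kappa> (x * t j))))
          = ?m (emb2 j i (rmat \<kappa> (x * t j))) (?m ri (emb2 0 j (rmat \<kappa> (x / t j))))"
          unfolding ri_def using opYBE[OF fin iL(2) jL(1) iL(1), of \<kappa> "x / t j" "x * t j"] jL iL e by auto
      qed
    qed
    then show ?thesis unfolding Rl_def RlpI_def mapE_def by simp
  qed
  have c4: "?m A RlpI = ?m RlpI A"
    by (rule loc_commute[OF fin locA locRlpI]) auto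
  have cR2: "cnj 0 i Rl = RlI" unfolding Rl_def RlI_def by (rule cnjRl[OF i]) (auto simp: tr_def)
  have c5: "?m Rl P = ?m P RlI"
    using P_comm'[OF fin iL(2) iL(1), of Rl] cR2 by (simp add: P_def)
  have "?m A (?m Rl (?m ri (?m W (?m (emb2 i 0 (rmat \<kappa> (x * t i))) Rlp))))
      = ?m A (?m Rl (?m ri (?m W (?m P Rlp))))" by (simp add: ri')
  also have "\<dots> = ?m A (?m Rl (?m ri (?m W (?m RlpI P))))" by (simp add: c1)
  also have "\<dots> = ?m A (?m Rl (?m ri (?m RlpI (?m W P))))" using ctx2[OF fin c2] by simp
  also have "\<dots> = ?m A (?m Rl (?m ri (?m RlpI (?m P Z))))" by (simp add: c3)
  also have "\<dots> = ?m A (?m RlpI (?m ri (?m Rl (?m P Z))))" using ctx3[OF fin ybe] by simp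
  also have "\<dots> = ?m RlpI (?m A (?m ri (?m Rl (?m P Z))))" using ctx2[OF fin c4] by simp
  also have "\<dots> = ?m RlpI (?m A (?m ri (?m P (?m RlI Z))))" using ctx2[OF fin c5] by simp
  also have "\<dots> = ?m RlpI (?m (?m A (?m ri P)) (?m RlI Z))" by (simp only: mult_assoc[OF fin])
  finally have chain: "?m A (?m Rl (?m ri (?m W (?m (emb2 i 0 (rmat \<kappa> (x * t i))) Rlp)))) = ?m RlpI (?m (?m A (?m ri P)) (?m RlI Z))" .
  have n1: "0 \<notin> {1..i}" "0 \<notin> {1..n}" by auto
  have locRZ: "locL {0..n} {1..n} (?m RlI Z)"
    using locRlI locZ i by (intro loc_mult[OF fin]) (auto intro: loc_mono)
  have tr1: "transfer n \<kappa> \<kappa>0 \<upsilon>0 \<psi>0 \<kappa>n \<upsilon>n \<psi>n t x = ?m1 RlpI (?m1 (ptrace0 n (?m A (?m ri P))) (?m RlI Z))"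
    using split chain T3[OF locRlpI n1(1)] T2[OF locRZ n1(2)] by simp
  define Ath where "Ath = (\<lambda>p q. theta \<kappa> p p * kbar \<kappa>0 \<upsilon>0 \<psi>0 (\<kappa>^2 * x) p q * theta \<kappa> q q)"
  have A_eq: "A = res {0..n} (emb1 0 Ath)"
    unfolding A_def Ath_def using prodops3[OF fin iL(2)] theta_collapse by simp
  define M where "M = (\<lambda>p1 p2 q1 q2. \<Sum>r\<in>UNIV. Ath p1 r * rmat \<kappa> (x / t i) r p2 q1 q2)"
  have loc: "ptrace0 n (?m A (?m ri P)) = smult_op (Phi_bdy \<kappa> \<kappa>0 \<upsilon>0 x) (res {1..n} (emb1 i (kbar \<kappa>0 \<upsilon>0 \<psi>0 x)))"
  proof -
    have "?m A (?m ri P) = ?m (emb2 0 i M) P"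
      unfolding A_eq ri_def M_def using E2[OF fin iL(2) iL(1)] iL by (simp add: mult_assoc[OF fin, symmetric])
    then have "ptrace0 n (?m A (?m ri P)) = res {1..n} (emb1 i (\<lambda>c d. \<Sum>b\<in>UNIV. M b c d b))"
      unfolding P_def using T4[OF iL(4)] by simp
    also have "(\<lambda>c d. \<Sum>b\<in>UNIV. M b c d b) = (\<lambda>c d. Phi_bdy \<kappa> \<kappa>0 \<upsilon>0 x * kbar \<kappa>0 \<upsilon>0 \<psi>0 x c d)"
    proof (intro ext)
      fix c d
      have xx: "x / t i = x^2" using x ti by (simp add: power2_eq_square)
      show "(\<Sum>b\<in>UNIV. M b c d b) = Phi_bdy \<kappa> \<kappa>0 \<upsilon>0 x * kbar \<kappa>0 \<upsilon>0 \<psi>0 x c d"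
        unfolding M_def Ath_def xx using loc1[OF k d1 d2 d3 d4, of c d] by (simp add: sum_distrib_right)
    qed
    finally show ?thesis by (simp add: emb1_smult res_smult)
  qed
  define RlpI1 where "RlpI1 = prodops {1..n} (mapE id (\<lambda>_. i) \<kappa> (\<lambda>j. x * t j) (rev [1..<i]))"
  define RlI1 where "RlI1 = prodops {1..n} (mapE (\<lambda>_. i) id \<kappa> (\<lambda>j. x / t j) [1..<i])"
  define Z1 where "Z1 = prodops {1..n} (mapE (\<lambda>_. i) id \<kappa> (\<lambda>j. x / t j) [Suc i..<n+1] @ [emb1 i (kmat \<kappa>n \<upsilon>n \<psi>n x)] @ mapE id (\<lambda>_. i) \<kappa> (\<lambda>j. x * t j) (rev [Suc i..<n+1]))"
  have r1: "res {1..n} RlpI = RlpI1" unfolding RlpI_def RlpI1_def mapE_def by (rule res01_pe2) auto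
  have r2: "res {1..n} RlI = RlI1" unfolding RlI_def RlI1_def mapE_def using iL by (intro res01_pe2) auto
  have r3: "res {1..n} Z = Z1" unfolding Z_def Z1_def
  proof (rule res01_prodops)
    show "\<forall>y\<in>set (mapE (\<lambda>_. i) id \<kappa> (\<lambda>j. x / t j) [Suc i..<n + 1] @ [emb1 i (kmat \<kappa>n \<upsilon>n \<psi>n x)] @ mapE id (\<lambda>_. i) \<kappa> (\<lambda>j. x * t j) (rev [Suc i..<n + 1])). \<exists>S. 0 \<notin> S \<and> locL {0..n} S y"
    proof
      fix y assume y: "y \<in> set (mapE (\<lambda>_. i) id \<kappa> (\<lambda>j. x / t j) [Suc i..<n + 1] @ [emb1 i (kmat \<kappa>n \<upsilon>n \<psi>n x)] @ mapE id (\<lambda>_. i) \<kappa> (\<lambda>j. x * t j) (rev [Suc i..<n + 1]))"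
      then have "locL {0..n} {1..n} y" using i by (auto simp: mapE_def intro!: loc_emb1 loc_emb2)
      then show "\<exists>S. 0 \<notin> S \<and> locL {0..n} S y" using n1(2) by (intro exI[where x="{1..n}"]) simp
    qed
  qed
  have q1: "?m1 RlpI Y = ?m1 RlpI1 Y" for Y by (metis mult_res_left r1)
  have q2: "?m1 RlI Y = ?m1 RlI1 Y" for Y by (metis mult_res_left r2)
  have q3: "?m1 Y Z = ?m1 Y Z1" for Y by (metis mult_res_right r3)
  have q4: "?m1 Y (?m RlI Z) = ?m1 Y (?m1 RlI Z)" for Y by (metis mult_res_right res01[OF locRlI n1(1)])
  have tr2: "transfer n \<kappa> \<kappa>0 \<upsilon>0 \<psi>0 \<kappa>n \<upsilon>n \<psi>n t x = smult_op (Phi_bdy \<kappa> \<kappa>0 \<upsilon>0 x) (?m1 RlpI1 (?m1 (emb1 i (kbar \<kappa>0 \<upsilon>0 \<psi>0 x)) (?m1 RlI1 Z1)))"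
  proof -
    have "transfer n \<kappa> \<kappa>0 \<upsilon>0 \<psi>0 \<kappa>n \<upsilon>n \<psi>n t x = ?m1 RlpI (?m1 (smult_op (Phi_bdy \<kappa> \<kappa>0 \<upsilon>0 x) (res {1..n} (emb1 i (kbar \<kappa>0 \<upsilon>0 \<psi>0 x)))) (?m RlI Z))"
      using tr1 loc by simp
    also have "\<dots> = ?m1 RlpI1 (?m1 (smult_op (Phi_bdy \<kappa> \<kappa>0 \<upsilon>0 x) (res {1..n} (emb1 i (kbar \<kappa>0 \<upsilon>0 \<psi>0 x)))) (?m1 RlI1 Z1))"
      by (simp only: q1 q2 q3 q4)
    finally show ?thesis by (simp add: smult_mult_left smult_mult_right)
  qed
  have fa: "(\<lambda>j. x * t j) = (\<lambda>j. t j / t i)" "(\<lambda>j. x / t j) = (\<lambda>j. 1 / (t j * t i))"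
     "(\<lambda>j. x / t j) = (\<lambda>j. 1 / (t i * t j))" "(\<lambda>j. x * t j) = (\<lambda>j. 1 * t j / t i)"
    using x by (auto simp: fun_eq_iff)
  have C: "transport n \<kappa> \<kappa>0 \<upsilon>0 \<psi>0 \<kappa>n \<upsilon>n \<psi>n 1 1 t i = ?m1 RlpI1 (?m1 (emb1 i (kbar \<kappa>0 \<upsilon>0 \<psi>0 x)) (?m1 RlI1 Z1))"
  proof -
    have s1: "prodops {1..n} (LS1 \<kappa> (\<lambda>j. t j / t i) (\<lambda>j. 1 / (t j * t i)) (kbar \<kappa>0 \<upsilon>0 \<psi>0 (1 / t i)) i) =
        prodops {1..n} (RS1 \<kappa> (\<lambda>j. t j / t i) (\<lambda>j. 1 / (t j * t i)) (kbar \<kappa>0 \<upsilon>0 \<psi>0 (1 / t i)) i)"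
      using i by (intro S1) auto
    have s2: "prodops {1..n} (LS2 \<kappa> (\<lambda>j. 1 / (t i * t j)) (\<lambda>j. 1 * t j / t i) (kmat \<kappa>n \<upsilon>n \<psi>n (1 / t i)) n i) =
        prodops {1..n} (RS2 \<kappa> (\<lambda>j. 1 / (t i * t j)) (\<lambda>j. 1 * t j / t i) (kmat \<kappa>n \<upsilon>n \<psi>n (1 / t i)) n i)"
      using i by (intro S2) auto
    have R1: "prodops {1..n} (RS1 \<kappa> (\<lambda>j. t j / t i) (\<lambda>j. 1 / (t j * t i)) (kbar \<kappa>0 \<upsilon>0 \<psi>0 (1 / t i)) i) = ?m1 RlpI1 (?m1 (emb1 i (kbar \<kappa>0 \<upsilon>0 \<psi>0 x)) RlI1)"
      unfolding RS1_def RlpI1_def RlI1_def fa(1) fa(2) x[symmetric] mapE_def by (simp add: prodops_append)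
    have R2: "prodops {1..n} (RS2 \<kappa> (\<lambda>j. 1 / (t i * t j)) (\<lambda>j. 1 * t j / t i) (kmat \<kappa>n \<upsilon>n \<psi>n (1 / t i)) n i) = Z1"
      unfolding RS2_def Z1_def fa(3) fa(4) x[symmetric] mapE_def by simp
    show ?thesis
      unfolding transport_split prodops_append[OF fin1] s1 s2 R1 R2 by (simp only: mult_assoc[OF fin1])
  qed
  show ?thesis using tr2 C by simp
qed


lemma transport_form:
  assumes i: "1 \<le> i" "i \<le> n"
  shows "transport n \<kappa> \<kappa>0 \<upsilon>0 \<psi>0 \<kappa>n \<upsilon>n \<psi>n 1 1 t i =
    mult {1..n} (prodops {1..n} (mapE id (\<lambda>_. i) \<kappa> (\<lambda>j. t j / t i) (rev [1..<i])))
     (mult {1..n} (emb1 i (kbar \<kappa>0 \<upsilon>0 \<psi>0 (1 / t i)))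
       (mult {1..n} (prodops {1..n} (mapE (\<lambda>_. i) id \<kappa> (\<lambda>j. 1 / (t j * t i)) [1..<i]))
         (prodops {1..n} (mapE (\<lambda>_. i) id \<kappa> (\<lambda>j. 1 / (t i * t j)) [Suc i..<n+1] @ [emb1 i (kmat \<kappa>n \<upsilon>n \<psi>n (1 / t i))]
            @ mapE id (\<lambda>_. i) \<kappa> (\<lambda>j. 1 * t j / t i) (rev [Suc i..<n+1])))))"
proof -
  have fin1: "finite {1..n}" by simp
  have s1: "prodops {1..n} (LS1 \<kappa> (\<lambda>j. t j / t i) (\<lambda>j. 1 / (t j * t i)) (kbar \<kappa>0 \<upsilon>0 \<psi>0 (1 / t i)) i) =
      prodops {1..n} (RS1 \<kappa> (\<lambda>j. t j / t i) (\<lambda>j. 1 / (t j * t i)) (kbar \<kappa>0 \<upsilon>0 \<psi>0 (1 / t i)) i)"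
    using i by (intro S1) auto
  have s2: "prodops {1..n} (LS2 \<kappa> (\<lambda>j. 1 / (t i * t j)) (\<lambda>j. 1 * t j / t i) (kmat \<kappa>n \<upsilon>n \<psi>n (1 / t i)) n i) =
      prodops {1..n} (RS2 \<kappa> (\<lambda>j. 1 / (t i * t j)) (\<lambda>j. 1 * t j / t i) (kmat \<kappa>n \<upsilon>n \<psi>n (1 / t i)) n i)"
    using i by (intro S2) auto
  have R1: "RS1 \<kappa> (\<lambda>j. t j / t i) (\<lambda>j. 1 / (t j * t i)) (kbar \<kappa>0 \<upsilon>0 \<psi>0 (1 / t i)) i =
     mapE id (\<lambda>_. i) \<kappa> (\<lambda>j. t j / t i) (rev [1..<i]) @ [emb1 i (kbar \<kappa>0 \<upsilon>0 \<psi>0 (1 / t i))] @ mapE (\<lambda>_. i) id \<kappa> (\<lambda>j. 1 / (t j * t i)) [1..<i]"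
    unfolding RS1_def mapE_def by simp
  have R2: "RS2 \<kappa> (\<lambda>j. 1 / (t i * t j)) (\<lambda>j. 1 * t j / t i) (kmat \<kappa>n \<upsilon>n \<psi>n (1 / t i)) n i =
     mapE (\<lambda>_. i) id \<kappa> (\<lambda>j. 1 / (t i * t j)) [Suc i..<n+1] @ [emb1 i (kmat \<kappa>n \<upsilon>n \<psi>n (1 / t i))] @ mapE id (\<lambda>_. i) \<kappa> (\<lambda>j. 1 * t j / t i) (rev [Suc i..<n+1])"
    unfolding RS2_def mapE_def by simp
  show ?thesis
    unfolding transport_split prodops_append[OF fin1] s1 s2 R1 R2
    by (simp only: prodops_append[OF fin1] mult_assoc[OF fin1] prodops_single[OF fin1] mult_res_left mult_res_right)
qed




lemma cancel_in: "finite L \<Longrightarrow> mult L A B = idop L \<Longrightarrow> mult L A (mult L B Y) = res L Y"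
  by (metis mult_assoc mult_idop_left)

lemma part2:
  fixes x :: complex
  assumes i: "1 \<le> i" "i \<le> n" and tnz: "\<forall>j\<in>{1..n}. t j \<noteq> 0" and x: "x = t i"
    and k: "\<kappa> \<noteq> 0" "\<kappa>0 \<noteq> 0" "\<upsilon>0 \<noteq> 0" "\<psi>0 \<noteq> 0" and k2: "\<kappa>^2 \<noteq> 1"
    and kn: "\<kappa>n \<noteq> 0" "\<upsilon>n \<noteq> 0" "\<psi>n \<noteq> 0"
    and d1: "1 - \<kappa>0 * \<upsilon>0 * (\<kappa>^2 * x) \<noteq> 0" "1 + \<kappa>0 * (\<kappa>^2 * x) / \<upsilon>0 \<noteq> 0"
    and d2: "1 - \<kappa>0 * \<upsilon>0 * (1/x) \<noteq> 0" "1 + \<kappa>0 * (1/x) / \<upsilon>0 \<noteq> 0"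
    and d3: "1 - \<kappa>^2 * x^2 \<noteq> 0"
    and d4: "1 - \<kappa>^2 * \<kappa>0 * \<upsilon>0 * x \<noteq> 0" "1 + \<kappa>^2 * \<kappa>0 * x / \<upsilon>0 \<noteq> 0"
    and dk: "1 - \<kappa>n * \<upsilon>n * x \<noteq> 0" "1 + \<kappa>n * x / \<upsilon>n \<noteq> 0" "1 - \<kappa>n * \<upsilon>n * (1/x) \<noteq> 0" "1 + \<kappa>n * (1/x) / \<upsilon>n \<noteq> 0"
    and dr: "\<forall>j\<in>{1..n}. 1 - \<kappa>^2 * x * t j \<noteq> 0 \<and> 1 - \<kappa>^2 * x / t j \<noteq> 0 \<and> 1 - \<kappa>^2 * (1/x) * t j \<noteq> 0 \<and> 1 - \<kappa>^2 * (1/x) / t j \<noteq> 0"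
  shows "mult {1..n} (transfer n \<kappa> \<kappa>0 \<upsilon>0 \<psi>0 \<kappa>n \<upsilon>n \<psi>n t x) (transport n \<kappa> \<kappa>0 \<upsilon>0 \<psi>0 \<kappa>n \<upsilon>n \<psi>n 1 1 t i)
     = smult_op (Phi_bdy \<kappa> \<kappa>0 \<upsilon>0 x) (idop {1..n})"
proof -
  have fin: "finite {0..n}" by simp
  have fin1: "finite {1..n}" by simp
  have ti: "t i \<noteq> 0" using tnz i by auto
  have x0: "x \<noteq> 0" using ti x by simp
  have iL: "i \<in> {0..n}" "0 \<in> {0..n}" "i \<noteq> 0" "i \<in> {1..n}" using i by auto
  define A where "A = prodops {0..n} [emb1 0 (theta \<kappa>), emb1 0 (kbar \<kappa>0 \<upsilon>0 \<psi>0 (\<kappa>^2 * x)), emb1 0 (theta \<kappa>)]"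
  define AI where "AI = prodops {0..n} [emb1 i (theta \<kappa>), emb1 i (kbar \<kappa>0 \<upsilon>0 \<psi>0 (\<kappa>^2 * x)), emb1 i (theta \<kappa>)]"
  define Rl where "Rl = prodops {0..n} (mapE (\<lambda>_. 0) id \<kappa> (\<lambda>j. x / t j) [1..<i])"
  define ri' where "ri' = emb2 i 0 (rmat \<kappa> (x * t i))"
  define W where "W = prodops {0..n} (mapE (\<lambda>_. 0) id \<kappa> (\<lambda>j. x / t j) [Suc i..<n+1] @ [emb1 0 (kmat \<kappa>n \<upsilon>n \<psi>n x)] @ mapE id (\<lambda>_. 0) \<kappa> (\<lambda>j. x * t j) (rev [Suc i..<n+1]))"
  define Rlp where "Rlp = prodops {0..n} (mapE id (\<lambda>_. 0) \<kappa> (\<lambda>j. x * t j) (rev [1..<i]))"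
  define RlpI where "RlpI = prodops {0..n} (mapE id (\<lambda>_. i) \<kappa> (\<lambda>j. x * t j) (rev [1..<i]))"
  define RlI where "RlI = prodops {0..n} (mapE (\<lambda>_. i) id \<kappa> (\<lambda>j. x / t j) [1..<i])"
  define Z where "Z = prodops {0..n} (mapE (\<lambda>_. i) id \<kappa> (\<lambda>j. x / t j) [Suc i..<n+1] @ [emb1 i (kmat \<kappa>n \<upsilon>n \<psi>n x)] @ mapE id (\<lambda>_. i) \<kappa> (\<lambda>j. x * t j) (rev [Suc i..<n+1]))"
  define P where "P = Pop {0..n} 0 i"
  let ?m = "mult {0..n}"
  let ?m1 = "mult {1..n}"
  have split: "transfer n \<kappa> \<kappa>0 \<upsilon>0 \<psi>0 \<kappa>n \<upsilon>n \<psi>n t x = ptrace0 n (?m A (?m Rl (?m (emb2 0 i (rmat \<kappa> (x / t i))) (?m W (?m ri' Rlp)))))"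
    unfolding A_def Rl_def ri'_def W_def Rlp_def using transfer_split[OF i] by simp
  have ri: "?m (emb2 0 i (rmat \<kappa> (x / t i))) Y = ?m P Y" for Y
  proof -
    have "x / t i = 1" using x ti by simp
    then have "res {0..n} (emb2 0 i (rmat \<kappa> (x / t i))) = Pop {0..n} 0 i" using rmat1[OF k2] iL by simp
    then show ?thesis unfolding P_def by (metis mult_res_left)
  qed
  have locRlpI: "locL {0..n} {1..i} RlpI" unfolding RlpI_def mapE_def by (rule loc_pe2) auto
  have locRlI: "locL {0..n} {1..i} RlI" unfolding RlI_def mapE_def by (rule loc_pe2) auto
  have locRlp: "locL {0..n} (insert 0 {1..<i}) Rlp" unfolding Rlp_def mapE_def by (rule loc_pe2) auto
  have locW: "locL {0..n} (insert 0 {Suc i..n}) W" unfolding W_def using i(2) by (rule locW)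
  have locZ: "locL {0..n} {i..n} Z" unfolding Z_def using i(2) by (rule locZ)
  have locAI: "locL {0..n} {i} AI" unfolding AI_def by (intro loc_prodops) (auto intro: loc_emb1)
  have cA: "cnj 0 i A = AI" unfolding A_def AI_def cnj_prodops[OF fin iL(2) iL(1)] list.map cnj_emb1 tr0i(2) ..
  have cR1: "cnj 0 i Rlp = RlpI" unfolding Rlp_def RlpI_def by (rule cnjRl[OF i]) (auto simp: tr_def)
  have cR2: "cnj 0 i Rl = RlI" unfolding Rl_def RlI_def by (rule cnjRl[OF i]) (auto simp: tr_def)
  have c1: "?m Rl P = ?m P RlI" using P_comm'[OF fin iL(2) iL(1), of Rl] cR2 by (simp add: P_def)
  have c2: "?m A P = ?m P AI" using P_comm'[OF fin iL(2) iL(1), of A] cA by (simp add: P_def)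
  have c3: "?m RlI W = ?m W RlI" by (rule loc_commute[OF fin locRlI locW]) auto
  have c4: "?m AI W = ?m W AI" by (rule loc_commute[OF fin locAI locW]) (use i in auto)
  have c5: "?m P W = ?m Z P"
    unfolding P_def W_def Z_def using P_comm[OF fin iL(2) iL(1)] cnjW[OF i] by simp
  have ybe: "?m RlI (?m ri' Rlp) = ?m Rlp (?m ri' RlI)"
  proof -
    have "?m (prodops {0..n} (map (\<lambda>j. emb2 i j (rmat \<kappa> (x / t j))) [1..<i])) (?m ri' (prodops {0..n} (map (\<lambda>j. emb2 j 0 (rmat \<kappa> (x * t j))) (rev [1..<i]))))
      = ?m (prodops {0..n} (map (\<lambda>j. emb2 j 0 (rmat \<kappa> (x * t j))) (rev [1..<i]))) (?m ri' (prodops {0..n} (map (\<lambda>j. emb2 i j (rmat \<kappa> (x / t j))) [1..<i])))"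
    proof (rule ybe_chain[OF fin])
      show "\<forall>j\<in>set [1..<i]. locL {0..n} {i, j} (emb2 i j (rmat \<kappa> (x / t j))) \<and> locL {0..n} {j, 0} (emb2 j 0 (rmat \<kappa> (x * t j)))"
        by (auto intro: loc_emb2)
      show "distinct [1..<i]" "i \<notin> set [1..<i]" "0 \<notin> set [1..<i]" "i \<noteq> 0" using iL by auto
      show "\<forall>j\<in>set [1..<i]. ?m (emb2 i j (rmat \<kappa> (x / t j))) (?m ri' (emb2 j 0 (rmat \<kappa> (x * t j))))
          = ?m (emb2 j 0 (rmat \<kappa> (x * t j))) (?m ri' (emb2 i j (rmat \<kappa> (x / t j))))"
      proof
        fix j assume j: "j \<in> set [1..<i]"
        then have tj: "t j \<noteq> 0" using tnz i by auto
        have e: "x / t j * (x * t j) = x * t i" using tj ti x by (simp add: field_simps power2_eq_square)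
        have jL: "j \<in> {0..n}" "j \<noteq> 0" "j \<noteq> i" using j i by auto
        show "?m (emb2 i j (rmat \<kappa> (x / t j))) (?m ri' (emb2 j 0 (rmat \<kappa> (x * t j))))
          = ?m (emb2 j 0 (rmat \<kappa> (x * t j))) (?m ri' (emb2 i j (rmat \<kappa> (x / t j))))"
          unfolding ri'_def using opYBE[OF fin iL(1) jL(1) iL(2), of \<kappa> "x / t j" "x * t j"] jL iL e by auto
      qed
    qed
    then show ?thesis unfolding Rlp_def RlI_def mapE_def by simp
  qed
  have c6: "?m AI Rlp = ?m Rlp AI" by (rule loc_commute[OF fin locAI locRlp]) (use i in auto)
  have c7: "?m P Rlp = ?m RlpI P" using P_comm[OF fin iL(2) iL(1), of Rlp] cR1 by (simp add: P_def)
  have "?m A (?m Rl (?m (emb2 0 i (rmat \<kappa> (x / t i))) (?m W (?m ri' Rlp))))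
      = ?m A (?m Rl (?m P (?m W (?m ri' Rlp))))" by (simp add: ri)
  also have "\<dots> = ?m A (?m P (?m RlI (?m W (?m ri' Rlp))))" using ctx2[OF fin c1] by simp
  also have "\<dots> = ?m P (?m AI (?m RlI (?m W (?m ri' Rlp))))" using ctx2[OF fin c2] by simp
  also have "\<dots> = ?m P (?m AI (?m W (?m RlI (?m ri' Rlp))))" using ctx2[OF fin c3] by simp
  also have "\<dots> = ?m P (?m W (?m AI (?m RlI (?m ri' Rlp))))" using ctx2[OF fin c4] by simp
  also have "\<dots> = ?m Z (?m P (?m AI (?m RlI (?m ri' Rlp))))" using ctx2[OF fin c5] by simp
  also have "\<dots> = ?m Z (?m P (?m AI (?m Rlp (?m ri' RlI))))" by (simp add: ybe)
  also have "\<dots> = ?m Z (?m P (?m Rlp (?m AI (?m ri' RlI))))" using ctx2[OF fin c6] by simp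
  also have "\<dots> = ?m Z (?m RlpI (?m P (?m AI (?m ri' RlI))))" using ctx2[OF fin c7] by simp
  also have "\<dots> = ?m Z (?m RlpI (?m (?m P (?m AI ri')) RlI))" by (simp only: mult_assoc[OF fin])
  finally have chain: "?m A (?m Rl (?m (emb2 0 i (rmat \<kappa> (x / t i))) (?m W (?m ri' Rlp)))) = ?m Z (?m RlpI (?m (?m P (?m AI ri')) RlI))" .
  have n1: "0 \<notin> {1..i}" "0 \<notin> {1..n}" "0 \<notin> {i..n}" using i by auto
  have tr1: "transfer n \<kappa> \<kappa>0 \<upsilon>0 \<psi>0 \<kappa>n \<upsilon>n \<psi>n t x = ?m1 Z (?m1 RlpI (?m1 (ptrace0 n (?m P (?m AI ri'))) RlI))"
    using split chain T3[OF locZ n1(3)] T3[OF locRlpI n1(1)] T2[OF locRlI n1(1)] by simp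
  define Ath where "Ath = (\<lambda>p q. theta \<kappa> p p * kbar \<kappa>0 \<upsilon>0 \<psi>0 (\<kappa>^2 * x) p q * theta \<kappa> q q)"
  have A_eq: "AI = res {0..n} (emb1 i Ath)"
    unfolding AI_def Ath_def using prodops3[OF fin iL(1)] theta_collapse by simp
  define M where "M = (\<lambda>p1 p2 q1 q2. \<Sum>r\<in>UNIV. Ath p1 r * rmat \<kappa> (x * t i) r p2 q1 q2)"
  define G where "G = (\<lambda>c d. \<Sum>b\<in>UNIV. M b c d b)"
  have loc: "ptrace0 n (?m P (?m AI ri')) = res {1..n} (emb1 i G)"
  proof -
    have "?m AI ri' = res {0..n} (emb2 i 0 M)"
      unfolding A_eq ri'_def M_def using E2[OF fin iL(1) iL(2)] iL by simp
    then show ?thesis unfolding P_def G_def using T4'[OF iL(4)] by simp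
  qed
  define RlpI1 where "RlpI1 = prodops {1..n} (mapE id (\<lambda>_. i) \<kappa> (\<lambda>j. x * t j) (rev [1..<i]))"
  define RlI1 where "RlI1 = prodops {1..n} (mapE (\<lambda>_. i) id \<kappa> (\<lambda>j. x / t j) [1..<i])"
  define Z1 where "Z1 = prodops {1..n} (mapE (\<lambda>_. i) id \<kappa> (\<lambda>j. x / t j) [Suc i..<n+1] @ [emb1 i (kmat \<kappa>n \<upsilon>n \<psi>n x)] @ mapE id (\<lambda>_. i) \<kappa> (\<lambda>j. x * t j) (rev [Suc i..<n+1]))"
  have r1: "res {1..n} RlpI = RlpI1" unfolding RlpI_def RlpI1_def mapE_def by (rule res01_pe2) auto
  have r2: "res {1..n} RlI = RlI1" unfolding RlI_def RlI1_def mapE_def using iL by (intro res01_pe2) auto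
  have r3: "res {1..n} Z = Z1" unfolding Z_def Z1_def
  proof (rule res01_prodops)
    show "\<forall>y\<in>set (mapE (\<lambda>_. i) id \<kappa> (\<lambda>j. x / t j) [Suc i..<n + 1] @ [emb1 i (kmat \<kappa>n \<upsilon>n \<psi>n x)] @ mapE id (\<lambda>_. i) \<kappa> (\<lambda>j. x * t j) (rev [Suc i..<n + 1])). \<exists>S. 0 \<notin> S \<and> locL {0..n} S y"
    proof
      fix y assume y: "y \<in> set (mapE (\<lambda>_. i) id \<kappa> (\<lambda>j. x / t j) [Suc i..<n + 1] @ [emb1 i (kmat \<kappa>n \<upsilon>n \<psi>n x)] @ mapE id (\<lambda>_. i) \<kappa> (\<lambda>j. x * t j) (rev [Suc i..<n + 1]))"
      then have "locL {0..n} {1..n} y" using i by (auto simp: mapE_def intro!: loc_emb1 loc_emb2)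
      then show "\<exists>S. 0 \<notin> S \<and> locL {0..n} S y" using n1(2) by (intro exI[where x="{1..n}"]) simp
    qed
  qed
  have q1: "?m1 Y RlI = ?m1 Y RlI1" for Y by (metis mult_res_right r2)
  have q2: "?m1 RlpI Y = ?m1 RlpI1 Y" for Y by (metis mult_res_left r1)
  have q3: "?m1 Z Y = ?m1 Z1 Y" for Y by (metis mult_res_left r3)
  have T: "transfer n \<kappa> \<kappa>0 \<upsilon>0 \<psi>0 \<kappa>n \<upsilon>n \<psi>n t x = ?m1 Z1 (?m1 RlpI1 (?m1 (emb1 i G) RlI1))"
    using tr1 loc by (simp only: q1 q2 q3 mult_res_left)
  define CP where "CP = prodops {1..n} (mapE id (\<lambda>_. i) \<kappa> (\<lambda>j. t j / t i) (rev [1..<i]))"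
  define CR where "CR = prodops {1..n} (mapE (\<lambda>_. i) id \<kappa> (\<lambda>j. 1 / (t j * t i)) [1..<i])"
  define CZ where "CZ = prodops {1..n} (mapE (\<lambda>_. i) id \<kappa> (\<lambda>j. 1 / (t i * t j)) [Suc i..<n+1] @ [emb1 i (kmat \<kappa>n \<upsilon>n \<psi>n (1 / t i))]
            @ mapE id (\<lambda>_. i) \<kappa> (\<lambda>j. 1 * t j / t i) (rev [Suc i..<n+1]))"
  have C: "transport n \<kappa> \<kappa>0 \<upsilon>0 \<psi>0 \<kappa>n \<upsilon>n \<psi>n 1 1 t i = ?m1 CP (?m1 (emb1 i (kbar \<kappa>0 \<upsilon>0 \<psi>0 (1 / t i))) (?m1 CR CZ))"
    unfolding CP_def CR_def CZ_def by (rule transport_form[OF i])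
  have jfacts: "1 - \<kappa>^2 * (x / t j) \<noteq> 0 \<and> 1 - \<kappa>^2 * (t j / t i) \<noteq> 0 \<and> 1 - \<kappa>^2 * (x * t j) \<noteq> 0 \<and> 1 - \<kappa>^2 * (1 / (t j * t i)) \<noteq> 0
      \<and> 1 - \<kappa>^2 * (1 / (t i * t j)) \<noteq> 0 \<and> 1 - \<kappa>^2 * (1 * t j / t i) \<noteq> 0 \<and> t j \<noteq> 0" if j: "j \<in> {1..n}" for j
  proof -
    have a: "1 - \<kappa>^2 * x * t j \<noteq> 0" "1 - \<kappa>^2 * x / t j \<noteq> 0" "1 - \<kappa>^2 * (1/x) * t j \<noteq> 0" "1 - \<kappa>^2 * (1/x) / t j \<noteq> 0"
      using dr j by auto
    have e: "\<kappa>^2 * (x / t j) = \<kappa>^2 * x / t j" "\<kappa>^2 * (t j / t i) = \<kappa>^2 * (1/x) * t j" "\<kappa>^2 * (x * t j) = \<kappa>^2 * x * t j"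
      "\<kappa>^2 * (1 / (t j * t i)) = \<kappa>^2 * (1/x) / t j" "\<kappa>^2 * (1 / (t i * t j)) = \<kappa>^2 * (1/x) / t j" "\<kappa>^2 * (1 * t j / t i) = \<kappa>^2 * (1/x) * t j"
      using x by simp_all
    have tj: "t j \<noteq> 0" using tnz j by auto
    show ?thesis unfolding e using a tj by blast
  qed
  have U1: "?m1 RlI1 CP = idop {1..n}"
    unfolding RlI1_def CP_def mapE_def id_def
  proof (rule tele[OF fin1], intro ballI)
    fix j assume "j \<in> set [1..<i]"
    then have j: "j \<in> {1..n}" "j \<noteq> i" using i by auto
    show "?m1 (emb2 i j (rmat \<kappa> (x / t j))) (emb2 j i (rmat \<kappa> (t j / t i))) = idop {1..n}"
      using jfacts[OF j(1)] j iL x ti by (intro opUnit) auto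
  qed
  have U2: "?m1 RlpI1 CR = idop {1..n}"
  proof -
    have "?m1 (prodops {1..n} (map (\<lambda>j. emb2 j i (rmat \<kappa> (x * t j))) (rev [1..<i]))) (prodops {1..n} (map (\<lambda>j. emb2 i j (rmat \<kappa> (1 / (t j * t i)))) (rev (rev [1..<i])))) = idop {1..n}"
    proof (rule tele[OF fin1], intro ballI)
      fix j assume "j \<in> set (rev [1..<i])"
      then have j: "j \<in> {1..n}" "j \<noteq> i" using i by auto
      show "?m1 (emb2 j i (rmat \<kappa> (x * t j))) (emb2 i j (rmat \<kappa> (1 / (t j * t i)))) = idop {1..n}"
        using jfacts[OF j(1)] j iL x ti by (intro opUnit) auto
    qed
    then show ?thesis unfolding RlpI1_def CR_def mapE_def by simp
  qed
  have U3: "?m1 Z1 CZ = idop {1..n}"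
  proof -
    define js where "js = [Suc i..<n+1]"
    have jsL: "j \<in> set js \<Longrightarrow> j \<in> {1..n} \<and> j \<noteq> i" for j using i by (auto simp: js_def)
    define ZA where "ZA = prodops {1..n} (map (\<lambda>j. emb2 i j (rmat \<kappa> (x / t j))) js)"
    define ZB where "ZB = prodops {1..n} (map (\<lambda>j. emb2 j i (rmat \<kappa> (x * t j))) (rev js))"
    define CA where "CA = prodops {1..n} (map (\<lambda>j. emb2 i j (rmat \<kappa> (1 / (t i * t j)))) js)"
    define CB where "CB = prodops {1..n} (map (\<lambda>j. emb2 j i (rmat \<kappa> (1 * t j / t i))) (rev js))"
    have Z1e: "Z1 = ?m1 ZA (?m1 (emb1 i (kmat \<kappa>n \<upsilon>n \<psi>n x)) ZB)"
      unfolding Z1_def ZA_def ZB_def js_def mapE_def by (simp add: prodops_append)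
    have CZe: "CZ = ?m1 CA (?m1 (emb1 i (kmat \<kappa>n \<upsilon>n \<psi>n (1 / t i))) CB)"
      unfolding CZ_def CA_def CB_def js_def mapE_def by (simp add: prodops_append)
    have u1: "?m1 ZB CA = idop {1..n}"
    proof -
      have "?m1 (prodops {1..n} (map (\<lambda>j. emb2 j i (rmat \<kappa> (x * t j))) (rev js))) (prodops {1..n} (map (\<lambda>j. emb2 i j (rmat \<kappa> (1 / (t i * t j)))) (rev (rev js)))) = idop {1..n}"
      proof (rule tele[OF fin1], intro ballI)
        fix j assume "j \<in> set (rev js)"
        then have j: "j \<in> {1..n}" "j \<noteq> i" using jsL by auto
        show "?m1 (emb2 j i (rmat \<kappa> (x * t j))) (emb2 i j (rmat \<kappa> (1 / (t i * t j)))) = idop {1..n}"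
          using jfacts[OF j(1)] j iL x ti by (intro opUnit) auto
      qed
      then show ?thesis unfolding ZB_def CA_def by simp
    qed
    have u2: "?m1 (emb1 i (kmat \<kappa>n \<upsilon>n \<psi>n x)) (emb1 i (kmat \<kappa>n \<upsilon>n \<psi>n (1 / t i))) = idop {1..n}"
      using opKunit[OF fin1 iL(4) kn x0 dk] x by simp
    have u3: "?m1 ZA CB = idop {1..n}"
      unfolding ZA_def CB_def
    proof (rule tele[OF fin1], intro ballI)
      fix j assume "j \<in> set js"
      then have j: "j \<in> {1..n}" "j \<noteq> i" using jsL by auto
      show "?m1 (emb2 i j (rmat \<kappa> (x / t j))) (emb2 j i (rmat \<kappa> (1 * t j / t i))) = idop {1..n}"
        using jfacts[OF j(1)] j iL x ti by (intro opUnit) auto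
    qed
    have "?m1 Z1 CZ = ?m1 ZA (?m1 (emb1 i (kmat \<kappa>n \<upsilon>n \<psi>n x)) (?m1 ZB (?m1 CA (?m1 (emb1 i (kmat \<kappa>n \<upsilon>n \<psi>n (1 / t i))) CB))))"
      unfolding Z1e CZe by (simp only: mult_assoc[OF fin1])
    also have "\<dots> = ?m1 ZA (?m1 (emb1 i (kmat \<kappa>n \<upsilon>n \<psi>n x)) (?m1 (emb1 i (kmat \<kappa>n \<upsilon>n \<psi>n (1 / t i))) CB))"
      using cancel_in[OF fin1 u1] by simp
    also have "\<dots> = ?m1 ZA CB"
      using cancel_in[OF fin1 u2] by (simp add: CB_def)
    also have "\<dots> = idop {1..n}" by (rule u3)
    finally show ?thesis .
  qed
  have Gk: "?m1 (emb1 i G) (emb1 i (kbar \<kappa>0 \<upsilon>0 \<psi>0 (1 / t i))) = smult_op (Phi_bdy \<kappa> \<kappa>0 \<upsilon>0 x) (idop {1..n})"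
  proof -
    have "(\<lambda>p q. \<Sum>r\<in>UNIV. G p r * kbar \<kappa>0 \<upsilon>0 \<psi>0 (1 / t i) r q) = (\<lambda>p q. Phi_bdy \<kappa> \<kappa>0 \<upsilon>0 x * (if p = q then 1 else 0))"
    proof (intro ext)
      fix p q
      have xx: "x * t i = x^2" using x by (simp add: power2_eq_square)
      show "(\<Sum>r\<in>UNIV. G p r * kbar \<kappa>0 \<upsilon>0 \<psi>0 (1 / t i) r q) = Phi_bdy \<kappa> \<kappa>0 \<upsilon>0 x * (if p = q then 1 else 0)"
        unfolding G_def M_def Ath_def xx x[symmetric] using loc2[OF k x0 d1 d2 d3 d4, of p q] by (simp add: sum_distrib_right power2_eq_square)
    qed
    then show ?thesis using E1[OF fin1 iL(4)] emb1_smult[of i "Phi_bdy \<kappa> \<kappa>0 \<upsilon>0 x" "\<lambda>p q. if p = q then 1 else 0"]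
      by (simp add: res_smult emb1_id)
  qed
  have "?m1 (transfer n \<kappa> \<kappa>0 \<upsilon>0 \<psi>0 \<kappa>n \<upsilon>n \<psi>n t x) (transport n \<kappa> \<kappa>0 \<upsilon>0 \<psi>0 \<kappa>n \<upsilon>n \<psi>n 1 1 t i)
     = ?m1 Z1 (?m1 RlpI1 (?m1 (emb1 i G) (?m1 RlI1 (?m1 CP (?m1 (emb1 i (kbar \<kappa>0 \<upsilon>0 \<psi>0 (1 / t i))) (?m1 CR CZ))))))"
    unfolding T C by (simp only: mult_assoc[OF fin1])
  also have "\<dots> = ?m1 Z1 (?m1 RlpI1 (?m1 (emb1 i G) (?m1 (emb1 i (kbar \<kappa>0 \<upsilon>0 \<psi>0 (1 / t i))) (?m1 CR CZ))))"
    using cancel_in[OF fin1 U1] by simp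
  also have "\<dots> = ?m1 Z1 (?m1 RlpI1 (smult_op (Phi_bdy \<kappa> \<kappa>0 \<upsilon>0 x) (?m1 CR CZ)))"
  proof -
    have Gk': "?m1 (emb1 i G) (?m1 (emb1 i (kbar \<kappa>0 \<upsilon>0 \<psi>0 (1 / t i))) Y) = smult_op (Phi_bdy \<kappa> \<kappa>0 \<upsilon>0 x) (res {1..n} Y)" for Y
    proof -
      have "?m1 (emb1 i G) (?m1 (emb1 i (kbar \<kappa>0 \<upsilon>0 \<psi>0 (1 / t i))) Y) = ?m1 (?m1 (emb1 i G) (emb1 i (kbar \<kappa>0 \<upsilon>0 \<psi>0 (1 / t i)))) Y"
        by (simp only: mult_assoc[OF fin1])
      also have "\<dots> = smult_op (Phi_bdy \<kappa> \<kappa>0 \<upsilon>0 x) (res {1..n} Y)"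
        by (simp only: Gk smult_mult_left mult_idop_left[OF fin1])
      finally show ?thesis .
    qed
    show ?thesis by (simp only: Gk' res_mult)
  qed
  also have "\<dots> = smult_op (Phi_bdy \<kappa> \<kappa>0 \<upsilon>0 x) (?m1 Z1 CZ)"
    using cancel_in[OF fin1 U2] by (simp add: smult_mult_right CZ_def)
  also have "\<dots> = smult_op (Phi_bdy \<kappa> \<kappa>0 \<upsilon>0 x) (idop {1..n})" by (simp only: U3)
  finally show ?thesis .
qed




lemma ops_res: "B \<in> ops L \<Longrightarrow> res L B = B"
  unfolding ops_def res_def by (intro ext) auto

lemma inv_conclude:
  assumes fin: "finite L" and inv: "op_invertible L C" and TC: "mult L T C = smult_op c (idop L)" and rT: "res L T = T"
  shows "T = smult_op c (opinv L C)"
proof -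
  obtain B where B: "B \<in> ops L" "mult L C B = idop L" "mult L B C = idop L"
    using inv unfolding op_invertible_def by blast
  have rB: "res L B = B" using B(1) by (rule ops_res)
  have oi: "opinv L C = B"
    unfolding opinv_def
  proof (rule the_equality)
    show "B \<in> ops L \<and> mult L C B = idop L \<and> mult L B C = idop L" using B by blast
  next
    fix B' assume B': "B' \<in> ops L \<and> mult L C B' = idop L \<and> mult L B' C = idop L"
    have "B' = res L B'" using B' ops_res by metis
    also have "\<dots> = mult L B' (mult L C B)" using B(2) fin by simp
    also have "\<dots> = mult L (mult L B' C) B" using fin by (simp only: mult_assoc)
    also have "\<dots> = B" using B' fin rB by simp
    finally show "B' = B" .
  qed
  have "T = res L T" using rT by simp
  also have "\<dots> = mult L T (mult L C B)" using B(2) fin by simp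
  also have "\<dots> = mult L (mult L T C) B" using fin by (simp only: mult_assoc)
  also have "\<dots> = smult_op c B" using TC fin rB by (simp add: smult_mult_left)
  finally show ?thesis using oi by simp
qed

lemma res_transfer: "res {1..n} (transfer n \<kappa> \<kappa>0 \<upsilon>0 \<psi>0 \<kappa>n \<upsilon>n \<psi>n t x) = transfer n \<kappa> \<kappa>0 \<upsilon>0 \<psi>0 \<kappa>n \<upsilon>n \<psi>n t x"
  unfolding transfer_def ptrace0_def res_def by (intro ext) auto

theorem mainTheorem12:
  fixes n i :: nat and \<kappa> \<kappa>0 \<kappa>n \<upsilon>0 \<upsilon>n \<psi>0 \<psi>n :: complex and t :: "nat \<Rightarrow> complex"
  assumes "\<kappa> \<noteq> 0" "\<kappa>0 \<noteq> 0" "\<kappa>n \<noteq> 0" "\<upsilon>0 \<noteq> 0" "\<upsilon>n \<noteq> 0" "\<psi>0 \<noteq> 0" "\<psi>n \<noteq> 0"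
    and "\<forall>j\<in>{1..n}. t j \<noteq> 0"
    and "nondegenerate n \<kappa> \<kappa>0 \<upsilon>0 \<kappa>n \<upsilon>n t"
    and "1 \<le> i" "i \<le> n"
  shows "transfer n \<kappa> \<kappa>0 \<upsilon>0 \<psi>0 \<kappa>n \<upsilon>n \<psi>n t (1 / t i) =
           smult_op (Phi_bdy \<kappa> \<kappa>0 \<upsilon>0 (1 / t i))
             (transport n \<kappa> \<kappa>0 \<upsilon>0 \<psi>0 \<kappa>n \<upsilon>n \<psi>n 1 1 t i)
       \<and> (op_invertible {1..n} (transport n \<kappa> \<kappa>0 \<upsilon>0 \<psi>0 \<kappa>n \<upsilon>n \<psi>n 1 1 t i) \<longrightarrow>
          transfer n \<kappa> \<kappa>0 \<upsilon>0 \<psi>0 \<kappa>n \<upsilon>n \<psi>n t (t i) =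
           smult_op (Phi_bdy \<kappa> \<kappa>0 \<upsilon>0 (t i))
             (opinv {1..n} (transport n \<kappa> \<kappa>0 \<upsilon>0 \<psi>0 \<kappa>n \<upsilon>n \<psi>n 1 1 t i)))"
proof -
  note k = assms(1-7)
  have i: "1 \<le> i" "i \<le> n" using assms by auto
  have iL: "i \<in> {1..n}" using i by auto
  have tnz: "\<forall>j\<in>{1..n}. t j \<noteq> 0" using assms by auto
  have ti: "t i \<noteq> 0" using tnz iL by auto
  have ND: "\<forall>e\<in>{t i, 1 / t i}.
       (\<forall>j\<in>{1..n}. 1 - \<kappa>^2 * e * t j \<noteq> 0 \<and> 1 - \<kappa>^2 * e / t j \<noteq> 0)
     \<and> (\<forall>y\<in>{\<kappa>^2 * e, 1 / t i}. (1 - \<kappa>0 * \<upsilon>0 * y) * (1 + \<kappa>0 * y / \<upsilon>0) \<noteq> 0)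
     \<and> (1 - \<kappa>n * \<upsilon>n * e) * (1 + \<kappa>n * e / \<upsilon>n) \<noteq> 0
     \<and> (1 - \<kappa>^2 * \<kappa>0 * \<upsilon>0 * e) * (1 + \<kappa>^2 * \<kappa>0 * e / \<upsilon>0) * (1 - \<kappa>^2 * e^2) \<noteq> 0"
    using assms(9) iL unfolding nondegenerate_def by blast
  have N1: "\<forall>j\<in>{1..n}. 1 - \<kappa>^2 * (1/t i) * t j \<noteq> 0 \<and> 1 - \<kappa>^2 * (1/t i) / t j \<noteq> 0"
    "(1 - \<kappa>0 * \<upsilon>0 * (\<kappa>^2 * (1/t i))) * (1 + \<kappa>0 * (\<kappa>^2 * (1/t i)) / \<upsilon>0) \<noteq> 0"
    "(1 - \<kappa>0 * \<upsilon>0 * (1/t i)) * (1 + \<kappa>0 * (1/t i) / \<upsilon>0) \<noteq> 0"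
    "(1 - \<kappa>n * \<upsilon>n * (1/t i)) * (1 + \<kappa>n * (1/t i) / \<upsilon>n) \<noteq> 0"
    "(1 - \<kappa>^2 * \<kappa>0 * \<upsilon>0 * (1/t i)) * (1 + \<kappa>^2 * \<kappa>0 * (1/t i) / \<upsilon>0) * (1 - \<kappa>^2 * (1/t i)^2) \<noteq> 0"
    using ND by auto
  have N2: "\<forall>j\<in>{1..n}. 1 - \<kappa>^2 * t i * t j \<noteq> 0 \<and> 1 - \<kappa>^2 * t i / t j \<noteq> 0"
    "(1 - \<kappa>0 * \<upsilon>0 * (\<kappa>^2 * t i)) * (1 + \<kappa>0 * (\<kappa>^2 * t i) / \<upsilon>0) \<noteq> 0"
    "(1 - \<kappa>n * \<upsilon>n * t i) * (1 + \<kappa>n * t i / \<upsilon>n) \<noteq> 0"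
    "(1 - \<kappa>^2 * \<kappa>0 * \<upsilon>0 * t i) * (1 + \<kappa>^2 * \<kappa>0 * t i / \<upsilon>0) * (1 - \<kappa>^2 * (t i)^2) \<noteq> 0"
    using ND by auto
  have k2: "\<kappa>^2 \<noteq> 1"
  proof -
    have "1 - \<kappa>^2 * (1/t i) * t i \<noteq> 0" using N1(1) iL by blast
    then show ?thesis using ti by auto
  qed
  have P1: "transfer n \<kappa> \<kappa>0 \<upsilon>0 \<psi>0 \<kappa>n \<upsilon>n \<psi>n t (1 / t i) =
           smult_op (Phi_bdy \<kappa> \<kappa>0 \<upsilon>0 (1 / t i)) (transport n \<kappa> \<kappa>0 \<upsilon>0 \<psi>0 \<kappa>n \<upsilon>n \<psi>n 1 1 t i)"
    by (rule part1[OF i tnz refl k(1) k(2) k(4) k(6) k2]) (use N1 in auto)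
  have P2: "mult {1..n} (transfer n \<kappa> \<kappa>0 \<upsilon>0 \<psi>0 \<kappa>n \<upsilon>n \<psi>n t (t i)) (transport n \<kappa> \<kappa>0 \<upsilon>0 \<psi>0 \<kappa>n \<upsilon>n \<psi>n 1 1 t i)
     = smult_op (Phi_bdy \<kappa> \<kappa>0 \<upsilon>0 (t i)) (idop {1..n})"
    by (rule part2[OF i tnz refl k(1) k(2) k(4) k(6) k2 k(3) k(5) k(7)]) (use N1 N2 in auto)
  show ?thesis
  proof (intro conjI impI)
    show "transfer n \<kappa> \<kappa>0 \<upsilon>0 \<psi>0 \<kappa>n \<upsilon>n \<psi>n t (1 / t i) =
           smult_op (Phi_bdy \<kappa> \<kappa>0 \<upsilon>0 (1 / t i)) (transport n \<kappa> \<kappa>0 \<upsilon>0 \<psi>0 \<kappa>n \<upsilon>n \<psi>n 1 1 t i)" by (rule P1)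
  next
    assume inv: "op_invertible {1..n} (transport n \<kappa> \<kappa>0 \<upsilon>0 \<psi>0 \<kappa>n \<upsilon>n \<psi>n 1 1 t i)"
    show "transfer n \<kappa> \<kappa>0 \<upsilon>0 \<psi>0 \<kappa>n \<upsilon>n \<psi>n t (t i) =
           smult_op (Phi_bdy \<kappa> \<kappa>0 \<upsilon>0 (t i)) (opinv {1..n} (transport n \<kappa> \<kappa>0 \<upsilon>0 \<psi>0 \<kappa>n \<upsilon>n \<psi>n 1 1 t i))"
      by (rule inv_conclude[OF _ inv P2 res_transfer]) simp
  qed
qed


end
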